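(* For every $k\in\{1,\dots,d-1\}$, every $l\in\{k,\dots,d\}$, every $S\in\Delta_l(\hat T)$ and every $n\in\{1,\dots,N^{k-1}_S\}$, $$\phi^{k,\mathrm{II}}_{S,n}=\mathrm d^{k-1}\phi^{k-1,\mathrm I}_{S,n},$$ where $\phi^{k-1,\mathrm I}_{S,n}$ is the type-I basis function of $X^{k-1}(\hat T)$ and $\phi^{k,\mathrm{II}}_{S,n}$ the type-II basis function of $X^k(\hat T)$.
   Context: Let $d\in\{2,3\}$ and let $\hat T\subset\mathbb R^d$ be an equilateral reference simplex; $\Delta_l(\hat T)$ denotes its $l$-dimensional subsimplices, $(\cdot,\cdot)_S$ the $L^2(S)$ inner product. Exterior derivatives $\mathrm d^0=\nabla,\mathrm d^1=\nabla\times,\mathrm d^2=\nabla\cdot,\mathrm d^3=0$ (3D; analogous in 2D). Fix an exact polynomial complex $X^0(\hat T)\to\cdots\to X^d(\hat T)\to0$ given by one of the standard first-kind, second-kind or hybrid finite element subcomplexes of the $L^2$ de Rham complex. Traces $\mathrm{tr}^k_S$: restriction ($k=0$), tangential projection ($k=1$), normal component ($k=2$ on a face), identity on $\hat T$. Surface derivatives $\mathrm d^k_S$ satisfy $\mathrm d^k_S\mathrm{tr}^k_Sv=\mathrm{tr}^{k+1}_S\mathrm d^kv$ and $\mathrm d^k_S\mathrm d^{k-1}_S=0$. For $\dim S\ge k+1$: $\mathring X^k(S)=\{\mathrm{tr}^k_Sv:v\in X^k(\hat T),\mathrm{tr}^k_{\partial S}v=0\}$; $\mathring X^{k,\mathrm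 I}(S)$ is the $L^2(S)$-orthogonal complement in $\mathring X^k(S)$ of $\ker\mathrm d^k_S$; $N^k_S=\dim\mathring X^{k,\mathrm I}(S)$, $N^k_S=1$ if $\dim S=k$, $N^{-1}_S=0$. For each $m\in\{0,\dots,d-1\}$ and each $S$ fix a basis $\{\psi^m_{S,j}\}$ of $\mathring X^{m,\mathrm I}(S)$ with $(\mathrm d^m_S\psi^m_{S,j},\mathrm d^m_S\psi^m_{S,i})_S=\delta_{ij}$, $(\psi^m_{S,j},\psi^m_{S,i})_S=\lambda_{S,j}\delta_{ij}$; the same bases are used in the degrees of freedom of all spaces $X^m(\hat T)$. Degrees of freedom on $X^m(\hat T)$: $\ell^{m,\mathrm I}_{S,1}(v)=(1,\mathrm{tr}^m_Sv)_S$, $S\in\Delta_m(\hat T)$ (point evaluation if $m=0$); $\ell^{m,\mathrm I}_{S,j}(v)=(\mathrm d^m_S\psi^m_{S,j},\mathrm d^m_S\mathrm{tr}^m_Sv)_S$, $j\le N^m_S$, $\dim S\in\{m+1,\dots,d\}$; $\ell^{m,\mathrm{II}}_{S,j}(v)=(\mathrm d^{m-1}_S\psi^{m-1}_{S,j},\mathrm{tr}^m_Sv)_S$, $j\le N^{m-1}_S$, $\dim S\in\{m,\dots,d\}$. They are unisolvent; $\{\phi^{m,\mathrm I}_{S,j},\phi^{m,\mathrm{II}}_{S,n}\}$ denotes the dual basis of $X^m(\hat T)$. *)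

theory Defs
  imports "HOL-Analysis.Analysis"
begin

text \<open>Differential k-forms on R^d are represented as functions
  x \<mapsto> (list of vectors \<mapsto> value); a k-form takes the value 0 on lists
  of length different from k and is multilinear and alternating on lists of
  length k.\<close>

type_synonym ('n) form = "real^('n::finite) \<Rightarrow> (real^'n) list \<Rightarrow> real"

definition drop_nth :: "nat \<Rightarrow> 'a list \<Rightarrow> 'a list" where
  "drop_nth i xs = take i xs @ drop (Suc i) xs"

definition dirderiv :: "(real^('n::finite) \<Rightarrow> real) \<Rightarrow> real^'n \<Rightarrow> real^'n \<Rightarrow> real" where
  "dirderiv f x v = deriv (\<lambda>t. f (x + t *\<^sub>R v)) 0"

definition extd :: "nat \<Rightarrow> ('n::finite) form \<Rightarrow> 'n form" where
  "extd k \<omega> = (\<lambda>x vs. if length vs = Suc k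
      then (\<Sum>i<Suc k. (-1)^i * dirderiv (\<lambda>y. \<omega> y (drop_nth i vs)) x (vs!i))
      else 0)"

definition alt_form :: "nat \<Rightarrow> ((real^('n::finite)) list \<Rightarrow> real) \<Rightarrow> bool" where
  "alt_form k a \<longleftrightarrow>
     (\<forall>vs. length vs \<noteq> k \<longrightarrow> a vs = 0) \<and>
     (\<forall>vs. length vs = k \<longrightarrow> (\<forall>i<k. linear (\<lambda>u. a (vs[i := u])))) \<and>
     (\<forall>vs. length vs = k \<longrightarrow> (\<forall>i<k. \<forall>j<k. i \<noteq> j \<and> vs!i = vs!j \<longrightarrow> a vs = 0))"

definition poly_form :: "nat \<Rightarrow> ('n::finite) form \<Rightarrow> bool" where
  "poly_form k \<omega> \<longleftrightarrow> (\<forall>x. alt_form k (\<omega> x)) \<and>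
     (\<forall>vs. real_polynomial_function (\<lambda>x. \<omega> x vs))"

definition ref_simplex :: "(nat \<Rightarrow> real^('n::finite)) \<Rightarrow> bool" where
  "ref_simplex p \<longleftrightarrow> inj_on p {..CARD('n)} \<and> \<not> affine_dependent (p ` {..CARD('n)}) \<and>
     (\<exists>h>0. \<forall>i\<le>CARD('n). \<forall>j\<le>CARD('n). i \<noteq> j \<longrightarrow> dist (p i) (p j) = h)"

text \<open>l-dimensional subsimplices, represented by their vertex index sets.\<close>
definition Delta :: "nat \<Rightarrow> nat \<Rightarrow> nat set set" where
  "Delta d l = {V. V \<subseteq> {..d} \<and> card V = Suc l}"

definition simp_set :: "(nat \<Rightarrow> real^('n::finite)) \<Rightarrow> nat set \<Rightarrow> (real^'n) set" where
  "simp_set p V = convex hull (p ` V)"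

definition tang :: "(nat \<Rightarrow> real^('n::finite)) \<Rightarrow> nat set \<Rightarrow> (real^'n) set" where
  "tang p V = span {p j - p i | i j. i \<in> V \<and> j \<in> V}"

definition onb :: "(nat \<Rightarrow> real^('n::finite)) \<Rightarrow> nat set \<Rightarrow> (real^'n) list" where
  "onb p V = (SOME B. length B = card V - 1 \<and> set B \<subseteq> tang p V \<and>
      (\<forall>i<length B. \<forall>j<length B. B!i \<bullet> B!j = (if i = j then 1 else 0)))"

text \<open>Integral over the subsimplex w.r.t. its (card V - 1)-dimensional
  surface measure, via an isometric parametrisation (point evaluation if
  the subsimplex is a vertex).\<close>
definition sint :: "(nat \<Rightarrow> real^('n::finite)) \<Rightarrow> nat set \<Rightarrow> (real^'n \<Rightarrow> real) \<Rightarrow> real" where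
  "sint p V f = (let B = onb p V; l = card V - 1; x0 = p (Min V) in
     integral\<^sup>L (PiM {..<l} (\<lambda>_. lborel))
       (\<lambda>t. indicator (simp_set p V) (x0 + (\<Sum>i<l. t i *\<^sub>R B!i))
            * f (x0 + (\<Sum>i<l. t i *\<^sub>R B!i))))"

definition finner :: "(nat \<Rightarrow> real^('n::finite)) \<Rightarrow> nat set \<Rightarrow> nat \<Rightarrow>
    ((real^'n) list \<Rightarrow> real) \<Rightarrow> ((real^'n) list \<Rightarrow> real) \<Rightarrow> real" where
  "finner p V k a b = (let B = onb p V in
     \<Sum>I\<in>{I. I \<subseteq> {..<card V - 1} \<and> card I = k}.
        a (map (\<lambda>i. B!i) (sorted_list_of_set I)) * b (map (\<lambda>i. B!i) (sorted_list_of_set I)))"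

definition l2 :: "(nat \<Rightarrow> real^('n::finite)) \<Rightarrow> nat set \<Rightarrow> nat \<Rightarrow> 'n form \<Rightarrow> 'n form \<Rightarrow> real" where
  "l2 p V k \<omega> \<eta> = sint p V (\<lambda>x. finner p V k (\<omega> x) (\<eta> x))"

definition tr_eq :: "(nat \<Rightarrow> real^('n::finite)) \<Rightarrow> nat set \<Rightarrow> nat \<Rightarrow> 'n form \<Rightarrow> 'n form \<Rightarrow> bool" where
  "tr_eq p V k \<omega> \<eta> \<longleftrightarrow> (\<forall>x\<in>simp_set p V. \<forall>vs. length vs = k \<and> set vs \<subseteq> tang p V \<longrightarrow> \<omega> x vs = \<eta> x vs)"

definition tr_zero :: "(nat \<Rightarrow> real^('n::finite)) \<Rightarrow> nat set \<Rightarrow> nat \<Rightarrow> 'n form \<Rightarrow> bool" where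
  "tr_zero p V k \<omega> \<longleftrightarrow> tr_eq p V k \<omega> (\<lambda>x vs. 0)"

definition bdry_tr_zero :: "(nat \<Rightarrow> real^('n::finite)) \<Rightarrow> nat set \<Rightarrow> nat \<Rightarrow> 'n form \<Rightarrow> bool" where
  "bdry_tr_zero p V k \<omega> \<longleftrightarrow> (\<forall>F. F \<subseteq> V \<and> card F + 1 = card V \<longrightarrow> tr_zero p F k \<omega>)"

text \<open>Representatives (elements of X^k) of the spaces ring-X^k(S) and ring-X^{k,I}(S);
  d^k_S tr^k_S w = tr^{k+1}_S d^k w.\<close>
definition ring_sp :: "(nat \<Rightarrow> real^('n::finite)) \<Rightarrow> (nat \<Rightarrow> 'n form set) \<Rightarrow> nat \<Rightarrow> nat set \<Rightarrow> 'n form set" where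
  "ring_sp p X k V = {v \<in> X k. bdry_tr_zero p V k v}"

definition ringI_sp :: "(nat \<Rightarrow> real^('n::finite)) \<Rightarrow> (nat \<Rightarrow> 'n form set) \<Rightarrow> nat \<Rightarrow> nat set \<Rightarrow> 'n form set" where
  "ringI_sp p X k V = {v \<in> ring_sp p X k V. \<forall>w\<in>ring_sp p X k V.
      tr_zero p V (Suc k) (extd k w) \<longrightarrow> l2 p V k v w = 0}"

definition psi_basis :: "(nat \<Rightarrow> real^('n::finite)) \<Rightarrow> (nat \<Rightarrow> 'n form set) \<Rightarrow> nat \<Rightarrow> nat set \<Rightarrow> nat
    \<Rightarrow> (nat \<Rightarrow> 'n form) \<Rightarrow> bool" where
  "psi_basis p X m V N \<psi> \<longleftrightarrow>
     (\<forall>j\<in>{1..N}. \<psi> j \<in> ringI_sp p X m V) \<and>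
     (\<forall>c. tr_zero p V m (\<lambda>x vs. \<Sum>j=1..N. c j * \<psi> j x vs) \<longrightarrow> (\<forall>j\<in>{1..N}. c j = 0)) \<and>
     (\<forall>v\<in>ringI_sp p X m V. \<exists>c. tr_eq p V m v (\<lambda>x vs. \<Sum>j=1..N. c j * \<psi> j x vs)) \<and>
     (\<forall>i\<in>{1..N}. \<forall>j\<in>{1..N}.
        l2 p V (Suc m) (extd m (\<psi> j)) (extd m (\<psi> i)) = (if i = j then 1 else 0)) \<and>
     (\<exists>lam. \<forall>i\<in>{1..N}. \<forall>j\<in>{1..N}. l2 p V m (\<psi> j) (\<psi> i) = (if i = j then lam j else 0))"

definition poly_complex :: "nat \<Rightarrow> (nat \<Rightarrow> ('n::finite) form set) \<Rightarrow> bool" where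
  "poly_complex d X \<longleftrightarrow>
     (\<forall>m\<le>d. (\<lambda>x vs. 0) \<in> X m \<and>
        (\<forall>v\<in>X m. \<forall>w\<in>X m. (\<lambda>x vs. v x vs + w x vs) \<in> X m) \<and>
        (\<forall>c. \<forall>v\<in>X m. (\<lambda>x vs. c * v x vs) \<in> X m) \<and>
        (\<forall>v\<in>X m. poly_form m v)) \<and>
     (\<forall>m<d. extd m ` X m \<subseteq> X (Suc m)) \<and>
     {v \<in> X 0. extd 0 v = (\<lambda>x vs. 0)} = {(\<lambda>x vs. if vs = [] then c else 0) | c. True} \<and>
     (\<forall>m. 1 \<le> m \<and> m \<le> d \<longrightarrow> {v \<in> X m. extd m v = (\<lambda>x vs. 0)} = extd (m - 1) ` X (m - 1))"

text \<open>Degrees of freedom of X^m: (TI, S, 1) with dim S = m is (1, tr S v)_S;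
  (TI, S, j) with dim S \<ge> m+1 is ell^{m,I}_{S,j}; (TII, S, j) is ell^{m,II}_{S,j}.\<close>
datatype dofk = TI | TII

definition dof_idx :: "nat \<Rightarrow> (nat \<Rightarrow> nat set \<Rightarrow> nat) \<Rightarrow> nat \<Rightarrow> (dofk \<times> nat set \<times> nat) set" where
  "dof_idx d N m =
     {(TI, V, 1) | V. V \<in> Delta d m}
   \<union> {(TI, V, j) | V j. (\<exists>l. m + 1 \<le> l \<and> l \<le> d \<and> V \<in> Delta d l) \<and> 1 \<le> j \<and> j \<le> N m V}
   \<union> {(TII, V, j) | V j. 1 \<le> m \<and> (\<exists>l. m \<le> l \<and> l \<le> d \<and> V \<in> Delta d l) \<and> 1 \<le> j \<and> j \<le> N (m - 1) V}"

definition dof :: "(nat \<Rightarrow> real^('n::finite)) \<Rightarrow> (nat \<Rightarrow> nat set \<Rightarrow> nat \<Rightarrow> 'n form) \<Rightarrow> nat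
    \<Rightarrow> dofk \<times> nat set \<times> nat \<Rightarrow> 'n form \<Rightarrow> real" where
  "dof p \<psi> m i v = (case i of
      (TI, V, j) \<Rightarrow> (if card V = Suc m then sint p V (\<lambda>x. v x (onb p V))
                     else l2 p V (Suc m) (extd m (\<psi> m V j)) (extd m v))
    | (TII, V, j) \<Rightarrow> l2 p V m (extd (m - 1) (\<psi> (m - 1) V j)) v)"

definition unisolvent :: "(nat \<Rightarrow> real^('n::finite)) \<Rightarrow> (nat \<Rightarrow> 'n form set) \<Rightarrow> (nat \<Rightarrow> nat set \<Rightarrow> nat \<Rightarrow> 'n form)
    \<Rightarrow> (nat \<Rightarrow> nat set \<Rightarrow> nat) \<Rightarrow> nat \<Rightarrow> bool" where
  "unisolvent p X \<psi> N m \<longleftrightarrow>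
     (\<forall>c. \<exists>!v. v \<in> X m \<and> (\<forall>i\<in>dof_idx CARD('n) N m. dof p \<psi> m i v = c i))"

definition dual_basis :: "(nat \<Rightarrow> real^('n::finite)) \<Rightarrow> (nat \<Rightarrow> 'n form set) \<Rightarrow> (nat \<Rightarrow> nat set \<Rightarrow> nat \<Rightarrow> 'n form)
    \<Rightarrow> (nat \<Rightarrow> nat set \<Rightarrow> nat) \<Rightarrow> nat \<Rightarrow> dofk \<times> nat set \<times> nat \<Rightarrow> 'n form" where
  "dual_basis p X \<psi> N m i = (THE v. v \<in> X m \<and>
     (\<forall>i'\<in>dof_idx CARD('n) N m. dof p \<psi> m i' v = (if i' = i then 1 else 0)))"

end

theory Submission
  imports Defs
begin

lemma coords_on2:
  fixes b1 b2 x :: "'a::real_inner"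
  assumes "b1 \<bullet> b1 = 1" "b2 \<bullet> b2 = 1" "b1 \<bullet> b2 = 0" "x \<in> span {b1,b2}"
  shows "x = (x \<bullet> b1) *\<^sub>R b1 + (x \<bullet> b2) *\<^sub>R b2"
proof -
  obtain k1 where "x - k1 *\<^sub>R b1 \<in> span {b2}" using assms(4) span_breakdown_eq by blast
  then obtain k2 where k2: "x - k1 *\<^sub>R b1 = k2 *\<^sub>R b2" by (auto simp: span_singleton)
  then have x: "x = k1 *\<^sub>R b1 + k2 *\<^sub>R b2" by (simp add: algebra_simps)
  have "x \<bullet> b1 = k1" "x \<bullet> b2 = k2" using assms(1-3) by (auto simp: x inner_add_left inner_commute[of b2 b1])
  then show ?thesis using x by simp
qed

lemma span2_eq:
  fixes b1 b2 u w :: "'a::euclidean_space"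
  assumes "b1 \<bullet> b1 = 1" "b2 \<bullet> b2 = 1" "b1 \<bullet> b2 = 0" "b1 \<in> span {u,w}" "b2 \<in> span {u,w}"
  shows "span {b1,b2} = span {u,w}"
proof -
  have ne: "b1 \<noteq> b2" using assms(1,3) by auto
  have ind: "independent {b1,b2}"
    by (rule pairwise_orthogonal_independent) (use assms(1-3) ne in \<open>auto simp: pairwise_def orthogonal_def inner_commute\<close>)
  have d2: "dim {b1,b2} = 2" using dim_eq_card_independent[OF ind] ne by simp
  have dd: "dim (span {u,w}) \<le> 2"
  proof -
    have "dim (span {u,w}) \<le> card {u,w}" by (rule dim_le_card) auto
    also have "\<dots> \<le> 2" by (simp add: card_insert_le_m1)
    finally show ?thesis .
  qed
  have "span {b1,b2} = span (span {u,w})"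
    by (rule dim_eq_span) (use assms(4,5) d2 dd in auto)
  then show ?thesis by simp
qed

lemma indep2_of_affine:
  fixes a b c :: "'a::euclidean_space"
  assumes "\<not> affine_dependent {a,b,c}" "a \<noteq> b" "a \<noteq> c" "b \<noteq> c"
  shows "\<forall>\<alpha> \<beta>. \<alpha> *\<^sub>R (b - a) + \<beta> *\<^sub>R (c - a) = 0 \<longrightarrow> \<alpha> = 0 \<and> \<beta> = 0"
proof (intro allI impI)
  fix \<alpha> \<beta> :: real assume h: "\<alpha> *\<^sub>R (b - a) + \<beta> *\<^sub>R (c - a) = 0"
  show "\<alpha> = 0 \<and> \<beta> = 0"
  proof (rule ccontr)
    assume nz: "\<not> (\<alpha> = 0 \<and> \<beta> = 0)"
    define U where "U = (\<lambda>x. if x = a then -(\<alpha>+\<beta>) else if x = b then \<alpha> else \<beta>)"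
    have "sum U {a,b,c} = 0" using assms(2-4) by (simp add: U_def)
    moreover have "(\<Sum>v\<in>{a,b,c}. U v *\<^sub>R v) = 0"
      using assms(2-4) h by (simp add: U_def algebra_simps)
    moreover have "\<exists>v\<in>{a,b,c}. U v \<noteq> 0" using nz assms(2-4) by (auto simp: U_def)
    ultimately have "affine_dependent {a,b,c}"
      unfolding affine_dependent_explicit by (intro exI[of _ "{a,b,c}"] exI[of _ U]) auto
    then show False using assms(1) by simp
  qed
qed

lemma onb_vertex: "onb p {i} = []"
proof -
  have "length (onb p {i}) = card {i} - 1 \<and> set (onb p {i}) \<subseteq> tang p {i} \<and>
      (\<forall>a<length (onb p {i}). \<forall>b<length (onb p {i}). onb p {i}!a \<bullet> onb p {i}!b = (if a = b then 1 else 0))"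
    unfolding onb_def by (rule someI[of _ "[]"]) auto
  then show ?thesis by simp
qed

lemma tang_sub_span:
  assumes "\<And>x. x \<in> V \<Longrightarrow> p x - p a \<in> span W"
  shows "tang p V \<subseteq> span W"
proof -
  have "{p j - p i | i j. i \<in> V \<and> j \<in> V} \<subseteq> span W"
  proof clarify
    fix i j assume "i \<in> V" "j \<in> V"
    then have h1: "p j - p a \<in> span W" "p i - p a \<in> span W" using assms by auto
    have "(p j - p a) - (p i - p a) \<in> span W" by (rule span_diff[OF h1])
    then show "p j - p i \<in> span W" by simp
  qed
  then show ?thesis unfolding tang_def by (simp add: span_minimal)
qed

lemma onb_edge:
  fixes p :: "nat \<Rightarrow> real^'n::finite"
  assumes "i \<noteq> j" "p i \<noteq> p j"
  shows "\<exists>c. onb p {i,j} = [c *\<^sub>R (p j - p i)] \<and> \<bar>c\<bar> * norm (p j - p i) = 1"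
proof -
  define v where "v = p j - p i"
  have v0: "v \<noteq> 0" using assms by (simp add: v_def)
  have vt: "v \<in> tang p {i,j}" unfolding tang_def v_def by (rule span_base) auto
  define Q where "Q = (\<lambda>B. length B = card {i,j} - 1 \<and> set B \<subseteq> tang p {i,j} \<and>
      (\<forall>a<length B. \<forall>b<length B. B!a \<bullet> B!b = (if a = b then 1 else (0::real))))"
  have "Q [v /\<^sub>R norm v]"
    unfolding Q_def using assms(1) v0 vt
    by (auto simp: span_scale tang_def dot_square_norm power2_eq_square)
  then have Qo: "Q (onb p {i,j})" unfolding onb_def Q_def[symmetric] by (rule someI)
  then obtain e where e: "onb p {i,j} = [e]" using assms(1) unfolding Q_def
    by (cases "onb p {i,j}") auto
  have et: "e \<in> tang p {i,j}" and ee: "e \<bullet> e = 1" using Qo unfolding Q_def e by auto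
  have "tang p {i,j} \<subseteq> span {v}"
    by (rule tang_sub_span[where a=i]) (auto simp: v_def span_base span_zero)
  with et obtain c where c: "e = c *\<^sub>R v" by (auto simp: span_singleton)
  have h1: "c * (c * (v \<bullet> v)) = 1" using ee by (simp add: c)
  have h2: "v \<bullet> v = (norm v)^2" by (simp add: dot_square_norm)
  have "c^2 * (norm v)^2 = 1" using h1 unfolding h2 by (simp add: power2_eq_square algebra_simps)
  then have "(\<bar>c\<bar> * norm v)^2 = 1" by (simp add: power_mult_distrib)
  then have "\<bar>c\<bar> * norm v = 1"
    by (metis abs_ge_zero norm_ge_zero zero_le_mult_iff power2_eq_1_iff abs_of_nonneg abs_minus_cancel abs_one)
  then show ?thesis using e c v_def by auto
qed

lemma onb_tri:
  fixes p :: "nat \<Rightarrow> real^'n::finite"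
  assumes d: "a \<noteq> b" "a \<noteq> c" "b \<noteq> c"
    and ind: "\<forall>\<alpha> \<beta>. \<alpha> *\<^sub>R (p b - p a) + \<beta> *\<^sub>R (p c - p a) = 0 \<longrightarrow> \<alpha> = 0 \<and> \<beta> = 0"
  shows "\<exists>b1 b2. onb p {a,b,c} = [b1,b2] \<and> b1 \<bullet> b1 = 1 \<and> b2 \<bullet> b2 = 1 \<and> b1 \<bullet> b2 = 0 \<and>
     p b - p a \<in> span {b1,b2} \<and> p c - p a \<in> span {b1,b2}"
proof -
  define u where "u = p b - p a"
  define w where "w = p c - p a"
  have u0: "u \<noteq> 0" using ind[rule_format, of 1 0] by (auto simp: u_def)
  have tsub: "tang p {a,b,c} \<subseteq> span {u,w}"
    by (rule tang_sub_span[where a=a]) (auto simp: u_def w_def span_base span_zero)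
  have ut: "u \<in> tang p {a,b,c}" unfolding tang_def u_def by (rule span_base) auto
  have wt: "w \<in> tang p {a,b,c}" unfolding tang_def w_def by (rule span_base) auto
  define b1 where "b1 = u /\<^sub>R norm u"
  define w' where "w' = w - (w \<bullet> b1) *\<^sub>R b1"
  have w'0: "w' \<noteq> 0"
  proof
    assume "w' = 0"
    then have "w = (w \<bullet> b1) *\<^sub>R b1" by (simp add: w'_def)
    also have "\<dots> = ((w \<bullet> b1) / norm u) *\<^sub>R u" by (simp add: b1_def divide_inverse)
    finally have "(- ((w \<bullet> b1) / norm u)) *\<^sub>R u + 1 *\<^sub>R w = 0" by simp
    then show False using ind[rule_format, of "- ((w \<bullet> b1) / norm u)" 1] by (simp add: u_def w_def)
  qed
  define b2 where "b2 = w' /\<^sub>R norm w'"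
  have b11: "b1 \<bullet> b1 = 1" using u0 by (simp add: b1_def dot_square_norm power2_eq_square)
  have b22: "b2 \<bullet> b2 = 1" using w'0 by (simp add: b2_def dot_square_norm power2_eq_square)
  have b12: "b1 \<bullet> b2 = 0"
  proof -
    have "b1 \<bullet> w' = 0" using b11 by (simp add: w'_def inner_diff_right inner_commute)
    then show ?thesis by (simp add: b2_def)
  qed
  have b1t: "b1 \<in> tang p {a,b,c}" using ut by (simp add: b1_def span_scale tang_def)
  have b2t: "b2 \<in> tang p {a,b,c}"
  proof -
    have "w' \<in> tang p {a,b,c}" unfolding w'_def using wt b1t by (simp add: tang_def span_diff span_scale)
    then show ?thesis by (simp add: b2_def tang_def span_scale)
  qed
  define Q where "Q = (\<lambda>B. length B = card {a,b,c} - 1 \<and> set B \<subseteq> tang p {a,b,c} \<and>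
      (\<forall>i<length B. \<forall>j<length B. B!i \<bullet> B!j = (if i = j then 1 else (0::real))))"
  have "Q [b1,b2]"
  proof -
    have "\<forall>i<2. \<forall>j<2. [b1,b2]!i \<bullet> [b1,b2]!j = (if i = j then 1 else (0::real))"
      using b11 b22 b12 by (auto simp: less_2_cases_iff inner_commute)
    then show ?thesis unfolding Q_def using d b1t b2t by auto
  qed
  then have Qo: "Q (onb p {a,b,c})" unfolding onb_def Q_def[symmetric] by (rule someI)
  then have l2: "length (onb p {a,b,c}) = 2" using d unfolding Q_def by auto
  then obtain B1 B2 where B: "onb p {a,b,c} = [B1,B2]"
    by (cases "onb p {a,b,c}"; cases "tl (onb p {a,b,c})") auto
  have cd: "card {a,b,c} - 1 = 2" using d by simp
  have Q': "\<forall>i<2. \<forall>j<2. [B1,B2]!i \<bullet> [B1,B2]!j = (if i = j then 1 else (0::real))"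
    using Qo unfolding Q_def B cd by simp
  have "B1 \<bullet> B1 = 1" using Q'[rule_format, of 0 0] by simp
  moreover have "B2 \<bullet> B2 = 1" using Q'[rule_format, of 1 1] by simp
  moreover have "B1 \<bullet> B2 = 0" using Q'[rule_format, of 0 1] by simp
  moreover have "B1 \<in> tang p {a,b,c}" "B2 \<in> tang p {a,b,c}" using Qo unfolding Q_def B by auto
  ultimately have on: "B1 \<bullet> B1 = 1" "B2 \<bullet> B2 = 1" "B1 \<bullet> B2 = 0" "B1 \<in> tang p {a,b,c}" "B2 \<in> tang p {a,b,c}"
    by auto
  have "span {B1,B2} = span {u,w}"
    by (rule span2_eq) (use on tsub in auto)
  then show ?thesis using B on span_base[of u "{u,w}"] span_base[of w "{u,w}"]
    by (intro exI[of _ B1] exI[of _ B2]) (auto simp: u_def w_def)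
qed

lemma meas_ind_cont:
  fixes a :: "'a::topological_space \<Rightarrow> 'b::topological_space" and G :: "'b \<Rightarrow> real"
  assumes "closed H" "continuous_on UNIV a" "continuous_on UNIV G"
  shows "(\<lambda>x. indicator H (a x) * G (a x)) \<in> borel_measurable borel"
proof -
  have am: "a \<in> borel_measurable borel" by (rule borel_measurable_continuous_onI[OF assms(2)])
  have "indicator H \<in> borel_measurable (borel :: 'b measure)"
    by (rule borel_measurable_indicator) (use assms(1) in \<open>simp add: borel_closed\<close>)
  from measurable_comp[OF am this] have i: "(\<lambda>x. indicator H (a x) :: real) \<in> borel_measurable borel" by (simp add: o_def)
  have g: "(\<lambda>x. G (a x)) \<in> borel_measurable borel" by (rule borel_measurable_continuous_on[OF assms(3) am])
  show ?thesis using i g by (rule borel_measurable_times)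
qed

lemma sint_vertex: "sint p {i} f = f (p i)"
proof -
  have "sint p {i} f = (\<integral>t. indicator (convex hull {p i}) (p i) * f (p i) \<partial>PiM ({}::nat set) (\<lambda>_. lborel::real measure))"
    by (simp add: sint_def Let_def onb_vertex simp_set_def)
  also have "\<dots> = f (p i)" by (subst PiM_empty) (simp add: measure_count_space)
  finally show ?thesis .
qed

lemma sint_edge:
  fixes p :: "nat \<Rightarrow> real^'n::finite"
  assumes ij: "i < j" and pij: "p i \<noteq> p j" and G: "continuous_on UNIV G"
    and e: "onb p {i,j} = [c *\<^sub>R (p j - p i)]" and c: "\<bar>c\<bar> * norm (p j - p i) = 1"
  shows "sint p {i,j} G = norm (p j - p i) * (\<integral>s. indicator {0..1} s * G (p i + s *\<^sub>R (p j - p i)) \<partial>lborel)"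
proof -
  define v where "v = p j - p i"
  have v0: "v \<noteq> 0" using pij by (simp add: v_def)
  have c0: "c \<noteq> 0" using c by auto
  define H where "H = convex hull {p i, p j}"
  have cH: "closed H" unfolding H_def by (simp add: compact_imp_closed compact_convex_hull)
  define F where "F = (\<lambda>s. indicator H (p i + s *\<^sub>R (c *\<^sub>R v)) * G (p i + s *\<^sub>R (c *\<^sub>R v)))"
  have Fm: "F \<in> borel_measurable lborel"
    unfolding F_def using meas_ind_cont[OF cH _ G, of "\<lambda>s. p i + s *\<^sub>R (c *\<^sub>R v)"]
    by (simp add: continuous_intros)
  have card: "card {i,j} = 2" and mn: "Min {i,j} = i" using ij by auto
  have "sint p {i,j} G = (\<integral>t. F (t 0) \<partial>PiM {0::nat} (\<lambda>_. lborel))"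
    by (simp add: sint_def Let_def e card mn lessThan_Suc F_def H_def simp_set_def v_def insert_commute)
  also have "\<dots> = (\<integral>s. F s \<partial>lborel)"
  proof -
    interpret product_sigma_finite "\<lambda>_::nat. lborel::real measure" by standard
    show ?thesis by (rule product_integral_singleton[OF Fm])
  qed
  also have "\<dots> = \<bar>1/c\<bar> *\<^sub>R (\<integral>s. F (0 + (1/c) * s) \<partial>lborel)"
    by (rule lborel_integral_real_affine) (use c0 in simp)
  also have "(\<lambda>s. F (0 + (1/c) * s)) = (\<lambda>s. indicator {0..1} s * G (p i + s *\<^sub>R v))"
  proof
    fix s
    have "p i + s *\<^sub>R v \<in> H \<longleftrightarrow> s \<in> {0..1}"
    proof
      assume "p i + s *\<^sub>R v \<in> H"
      then obtain u where u: "0 \<le> u" "u \<le> 1" "p i + s *\<^sub>R v = p i + u *\<^sub>R v"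
        unfolding H_def convex_hull_2_alt v_def by auto
      then have "s = u" using v0 by (simp add: scaleR_cancel_right)
      then show "s \<in> {0..1}" using u by simp
    next
      assume "s \<in> {0..1}" then show "p i + s *\<^sub>R v \<in> H"
        unfolding H_def convex_hull_2_alt v_def by auto
    qed
    then show "F (0 + (1/c) * s) = indicator {0..1} s * G (p i + s *\<^sub>R v)"
      using c0 by (simp add: F_def indicator_def)
  qed
  also have "\<bar>1/c\<bar> = norm v" using c c0 by (simp add: v_def field_simps abs_divide)
  finally show ?thesis by (simp add: v_def)
qed

lemma PiM2_distr:
  "distr (lborel \<Otimes>\<^sub>M lborel) (PiM {0,1::nat} (\<lambda>_. lborel::real measure))
      (\<lambda>z. \<lambda>i\<in>{0,1::nat}. if i = 0 then fst z else snd z) = PiM {0,1} (\<lambda>_. lborel)"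
proof -
  interpret product_sigma_finite "\<lambda>_::nat. lborel::real measure" by standard
  show ?thesis
  proof (rule PiM_eqI)
    fix A assume A: "\<And>i. i \<in> {0,1::nat} \<Longrightarrow> A i \<in> sets (lborel::real measure)"
    have mes: "(\<lambda>z. \<lambda>i\<in>{0,1::nat}. if i = 0 then fst z else snd z) \<in> measurable (lborel \<Otimes>\<^sub>M lborel) (PiM {0,1::nat} (\<lambda>_. lborel::real measure))"
      by (rule measurable_restrict) auto
    have pre: "(\<lambda>z. \<lambda>i\<in>{0,1::nat}. if i = 0 then fst z else snd z) -` Pi\<^sub>E {0,1} A \<inter> space (lborel \<Otimes>\<^sub>M lborel) = A 0 \<times> A 1"
      by (auto simp: space_pair_measure PiE_def Pi_def)
    show "emeasure (distr (lborel \<Otimes>\<^sub>M lborel) (PiM {0,1::nat} (\<lambda>_. lborel::real measure))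
      (\<lambda>z. \<lambda>i\<in>{0,1::nat}. if i = 0 then fst z else snd z)) (Pi\<^sub>E {0,1} A) = (\<Prod>i\<in>{0,1}. emeasure lborel (A i))"
    proof -
      have "emeasure (distr (lborel \<Otimes>\<^sub>M lborel) (PiM {0,1::nat} (\<lambda>_. lborel::real measure))
        (\<lambda>z. \<lambda>i\<in>{0,1::nat}. if i = 0 then fst z else snd z)) (Pi\<^sub>E {0,1} A) =
        emeasure (lborel \<Otimes>\<^sub>M lborel) ((\<lambda>z. \<lambda>i\<in>{0,1::nat}. if i = 0 then fst z else snd z) -` Pi\<^sub>E {0,1} A \<inter> space (lborel \<Otimes>\<^sub>M lborel))"
        by (rule emeasure_distr[OF mes]) (use A in \<open>auto intro!: sets_PiM_I_finite\<close>)
      also have "\<dots> = emeasure (lborel \<Otimes>\<^sub>M lborel) (A 0 \<times> A 1)" by (simp only: pre)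
      also have "\<dots> = emeasure lborel (A 0) * emeasure lborel (A 1)"
        by (rule lborel.emeasure_pair_measure_Times) (use A in auto)
      finally show ?thesis by simp
    qed
  qed auto
qed

lemma PiM2_integral:
  fixes f :: "real \<Rightarrow> real \<Rightarrow> real"
  assumes f: "(\<lambda>z. f (fst z) (snd z)) \<in> borel_measurable borel"
  shows "(\<integral>t. f (t 0) (t 1) \<partial>PiM {..<2::nat} (\<lambda>_. lborel)) = (\<integral>z. f (fst z) (snd z) \<partial>lborel)"
proof -
  have e: "{..<2::nat} = {0,1}" by auto
  have mes: "(\<lambda>z. \<lambda>i\<in>{0,1::nat}. if i = 0 then fst z else snd z) \<in> measurable (lborel \<Otimes>\<^sub>M lborel) (PiM {0,1::nat} (\<lambda>_. lborel::real measure))"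
    by (rule measurable_restrict) auto
  have fm: "(\<lambda>t. f (t 0) (t 1)) \<in> borel_measurable (PiM {0,1::nat} (\<lambda>_. lborel::real measure))"
  proof -
    have "(\<lambda>t. (t 0, t (1::nat))) \<in> measurable (PiM {0,1::nat} (\<lambda>_. lborel::real measure)) (lborel \<Otimes>\<^sub>M lborel)"
      by (intro measurable_Pair measurable_component_singleton) auto
    then have "(\<lambda>t. (t 0, t (1::nat))) \<in> measurable (PiM {0,1::nat} (\<lambda>_. lborel::real measure)) borel"
      by (simp add: lborel_prod measurable_lborel2)
    from measurable_comp[OF this f] show ?thesis by (simp add: o_def)
  qed
  have "(\<integral>t. f (t 0) (t 1) \<partial>PiM {..<2::nat} (\<lambda>_. lborel)) = 
     (\<integral>t. f (t 0) (t 1) \<partial>distr (lborel \<Otimes>\<^sub>M lborel) (PiM {0,1::nat} (\<lambda>_. lborel::real measure))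
      (\<lambda>z. \<lambda>i\<in>{0,1::nat}. if i = 0 then fst z else snd z))"
    by (simp only: e PiM2_distr)
  also have "\<dots> = (\<integral>z. f (fst z) (snd z) \<partial>(lborel \<Otimes>\<^sub>M lborel))"
    by (subst integral_distr[OF mes fm]) simp
  also have "\<dots> = (\<integral>z. f (fst z) (snd z) \<partial>lborel)" by (simp add: lborel_prod)
  finally show ?thesis .
qed

lemma integrable_pair_ind:
  fixes h :: "real \<times> real \<Rightarrow> real"
  assumes "compact S" "continuous_on UNIV h"
  shows "integrable (lborel \<Otimes>\<^sub>M lborel) (\<lambda>z. indicator S z * h z)"
proof -
  have "integrable lborel (\<lambda>z. indicator S z *\<^sub>R h z)"
    by (rule borel_integrable_compact) (use assms in \<open>auto intro: continuous_on_subset\<close>)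
  then show ?thesis by (simp add: lborel_prod)
qed

lemma cv2_main:
  fixes h :: "real \<times> real \<Rightarrow> real" and T :: "(real\<times>real) set"
    and u0 u1 w0 w1 :: real
  assumes T: "compact T" and h: "continuous_on UNIV h" and u0: "u0 \<noteq> 0" and D: "u0*w1 - u1*w0 \<noteq> 0"
  shows "(\<integral>z. indicator ((\<lambda>z. (u0 * fst z + w0 * snd z, u1 * fst z + w1 * snd z)) ` T) z * h z \<partial>lborel)
     = \<bar>u0*w1 - u1*w0\<bar> * (\<integral>z. indicator T z * h (u0 * fst z + w0 * snd z, u1 * fst z + w1 * snd z) \<partial>lborel)"
proof -
  define D where "D = u0*w1 - u1*w0"
  define M where "M = (\<lambda>z::real\<times>real. (u0 * fst z + w0 * snd z, u1 * fst z + w1 * snd z))"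
  define L where "L = (\<lambda>z::real\<times>real. (fst z, (u1/u0) * fst z + (D/u0) * snd z))"
  define N where "N = (\<lambda>z::real\<times>real. (u0 * fst z + w0 * snd z, snd z))"
  have D0: "D \<noteq> 0" using D by (simp add: D_def)
  have LN: "L (N z) = M z" for z
    using u0 by (simp add: L_def N_def M_def D_def field_simps)
  have injL: "inj L"
  proof (rule injI)
    fix a b assume "L a = L b"
    then have "fst a = fst b" "(D/u0) * snd a = (D/u0) * snd b" by (auto simp: L_def)
    then show "a = b" using D0 u0 by (simp add: prod_eq_iff)
  qed
  have injN: "inj N"
  proof (rule injI)
    fix a b assume "N a = N b"
    then have "snd a = snd b" "u0 * fst a + w0 * snd a = u0 * fst b + w0 * snd b" by (auto simp: N_def)
    then show "a = b" using u0 by (simp add: prod_eq_iff)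
  qed
  have injM: "inj M" using injL injN LN by (metis injD injI)
  have contM: "continuous_on UNIV M" unfolding M_def by (intro continuous_intros)
  have contL: "continuous_on UNIV L" unfolding L_def by (intro continuous_intros)
  have contN: "continuous_on UNIV N" unfolding N_def by (intro continuous_intros)
  have cMT: "compact (M ` T)" by (rule compact_continuous_image[OF continuous_on_subset[OF contM] T]) auto
  have cNT: "compact (N ` T)" by (rule compact_continuous_image[OF continuous_on_subset[OF contN] T]) auto
  define k where "k = (\<lambda>z. indicator (M ` T) z * h z)"
  define K where "K = (\<lambda>z. indicator (N ` T) z * h (L z))"
  define G where "G = (\<lambda>z. indicator T z * h (M z))"
  have kL: "k (L z) = K z" for z
  proof -
    have "L z \<in> M ` T \<longleftrightarrow> z \<in> N ` T"
    proof
      assume "L z \<in> M ` T" then obtain y where "y \<in> T" "L z = M y" by auto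
      then have "L z = L (N y)" by (simp add: LN)
      then have "z = N y" using injL by (simp add: inj_eq)
      then show "z \<in> N ` T" using \<open>y \<in> T\<close> by auto
    next
      assume "z \<in> N ` T" then show "L z \<in> M ` T" using LN by auto
    qed
    then show ?thesis by (simp add: k_def K_def indicator_def)
  qed
  have KN: "K (N z) = G z" for z
  proof -
    have "N z \<in> N ` T \<longleftrightarrow> z \<in> T" using injN by (auto simp: inj_eq)
    then show ?thesis by (simp add: K_def G_def LN indicator_def)
  qed
  have ik: "integrable (lborel \<Otimes>\<^sub>M lborel) k"
    unfolding k_def by (rule integrable_pair_ind[OF cMT h])
  have iK: "integrable (lborel \<Otimes>\<^sub>M lborel) K"
    unfolding K_def by (rule integrable_pair_ind[OF cNT]) (intro continuous_on_compose2[OF h contL]; simp)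
  have iG: "integrable (lborel \<Otimes>\<^sub>M lborel) G"
    unfolding G_def by (rule integrable_pair_ind[OF T]) (intro continuous_on_compose2[OF h contM]; simp)
  have "(\<integral>z. k z \<partial>lborel) = (\<integral>z. k z \<partial>(lborel \<Otimes>\<^sub>M lborel))" by (simp add: lborel_prod)
  also have "\<dots> = (\<integral>x. \<integral>y. k (x,y) \<partial>lborel \<partial>lborel)"
    by (rule lborel_pair.integral_fst'[OF ik, symmetric])
  also have "\<dots> = (\<integral>x. \<bar>D/u0\<bar> * (\<integral>r. K (x,r) \<partial>lborel) \<partial>lborel)"
  proof -
    have "(\<integral>y. k (x,y) \<partial>lborel) = \<bar>D/u0\<bar> * (\<integral>r. K (x,r) \<partial>lborel)" for x :: real
    proof -
    have "(\<integral>y. k (x,y) \<partial>lborel) = \<bar>D/u0\<bar> *\<^sub>R (\<integral>r. k (x, (u1/u0) * x + (D/u0) * r) \<partial>lborel)"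
      by (rule lborel_integral_real_affine) (use D0 u0 in auto)
    also have "(\<lambda>r. k (x, (u1/u0) * x + (D/u0) * r)) = (\<lambda>r. K (x,r))"
      using kL by (auto simp: L_def)
    finally show "(\<integral>y. k (x,y) \<partial>lborel) = \<bar>D/u0\<bar> * (\<integral>r. K (x,r) \<partial>lborel)" by simp
  qed
  then show ?thesis by simp
  qed
  also have "\<dots> = \<bar>D/u0\<bar> * (\<integral>x. \<integral>r. K (x,r) \<partial>lborel \<partial>lborel)" by simp
  also have "(\<integral>x. \<integral>r. K (x,r) \<partial>lborel \<partial>lborel) = (\<integral>r. \<integral>x. K (x,r) \<partial>lborel \<partial>lborel)"
    by (rule lborel_pair.Fubini_integral[symmetric]) (use iK in \<open>simp add: case_prod_beta'\<close>)
  also have "\<dots> = (\<integral>r. \<bar>u0\<bar> * (\<integral>s. G (s,r) \<partial>lborel) \<partial>lborel)"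
  proof -
    have "(\<integral>x. K (x,r) \<partial>lborel) = \<bar>u0\<bar> * (\<integral>s. G (s,r) \<partial>lborel)" for r :: real
    proof -
    have "(\<integral>x. K (x,r) \<partial>lborel) = \<bar>u0\<bar> *\<^sub>R (\<integral>s. K (w0 * r + u0 * s, r) \<partial>lborel)"
      by (rule lborel_integral_real_affine) (use u0 in auto)
    also have "(\<lambda>s. K (w0 * r + u0 * s, r)) = (\<lambda>s. G (s,r))"
      using KN by (auto simp: N_def algebra_simps)
    finally show "(\<integral>x. K (x,r) \<partial>lborel) = \<bar>u0\<bar> * (\<integral>s. G (s,r) \<partial>lborel)" by simp
  qed
  then show ?thesis by simp
  qed
  also have "\<dots> = \<bar>u0\<bar> * (\<integral>r. \<integral>s. G (s,r) \<partial>lborel \<partial>lborel)" by simp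
  also have "(\<integral>r. \<integral>s. G (s,r) \<partial>lborel \<partial>lborel) = (\<integral>z. G z \<partial>(lborel \<Otimes>\<^sub>M lborel))"
    using lborel_pair.integral_snd[of "\<lambda>s r. G (s,r)"] iG by (simp add: case_prod_beta')
  also have "\<dots> = (\<integral>z. G z \<partial>lborel)" by (simp add: lborel_prod)
  finally have "(\<integral>z. k z \<partial>lborel) = \<bar>D/u0\<bar> * (\<bar>u0\<bar> * (\<integral>z. G z \<partial>lborel))" .
  also have "\<dots> = \<bar>D\<bar> * (\<integral>z. G z \<partial>lborel)" using u0 by (simp add: abs_divide)
  finally show ?thesis by (simp add: k_def G_def M_def D_def)
qed

lemma cv2:
  fixes h :: "real \<times> real \<Rightarrow> real" and T :: "(real\<times>real) set"
    and u0 u1 w0 w1 :: real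
  assumes T: "compact T" and h: "continuous_on UNIV h" and D: "u0*w1 - u1*w0 \<noteq> 0"
  shows "(\<integral>z. indicator ((\<lambda>z. (u0 * fst z + w0 * snd z, u1 * fst z + w1 * snd z)) ` T) z * h z \<partial>lborel)
     = \<bar>u0*w1 - u1*w0\<bar> * (\<integral>z. indicator T z * h (u0 * fst z + w0 * snd z, u1 * fst z + w1 * snd z) \<partial>lborel)"
proof (cases "u0 = 0")
  case False
  then show ?thesis using cv2_main[OF T h False D] by simp
next
  case True
  then have w0: "w0 \<noteq> 0" using D by auto
  have T': "compact (prod.swap ` T)" by (rule compact_continuous_image[OF _ T]) (intro continuous_intros)
  have D': "w0*u1 - w1*u0 \<noteq> 0" using D by (simp add: algebra_simps)
  have img: "(\<lambda>z. (w0 * fst z + u0 * snd z, w1 * fst z + u1 * snd z)) ` (prod.swap ` T)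
      = (\<lambda>z. (u0 * fst z + w0 * snd z, u1 * fst z + w1 * snd z)) ` T"
    by (auto simp: image_image algebra_simps)
  define G where "G = (\<lambda>z. indicator T z * h (u0 * fst z + w0 * snd z, u1 * fst z + w1 * snd z))"
  have Gm: "G \<in> borel_measurable (lborel \<Otimes>\<^sub>M lborel)"
  proof -
    have "integrable (lborel \<Otimes>\<^sub>M lborel) G"
      unfolding G_def by (rule integrable_pair_ind[OF T]) (intro continuous_on_compose2[OF h] continuous_intros; simp)
    then show ?thesis by auto
  qed
  have ind: "indicator (prod.swap ` T) z = (indicator T (prod.swap z) :: real)" for z
    by (auto simp: indicator_def image_iff) (metis swap_swap)+
  have "(\<integral>z. indicator (prod.swap ` T) z * h (w0 * fst z + u0 * snd z, w1 * fst z + u1 * snd z) \<partial>lborel)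
       = (\<integral>(x,y). G (y,x) \<partial>(lborel \<Otimes>\<^sub>M lborel))"
    unfolding ind by (simp add: lborel_prod G_def case_prod_beta' algebra_simps prod.swap_def)
  also have "\<dots> = (\<integral>z. G z \<partial>(lborel \<Otimes>\<^sub>M lborel))"
    by (rule lborel_pair.integral_product_swap[OF Gm])
  finally have sw: "(\<integral>z. indicator (prod.swap ` T) z * h (w0 * fst z + u0 * snd z, w1 * fst z + u1 * snd z) \<partial>lborel)
       = (\<integral>z. G z \<partial>lborel)" by (simp add: lborel_prod)
  have "\<bar>w0*u1 - w1*u0\<bar> = \<bar>u0*w1 - u1*w0\<bar>" by (simp add: abs_minus_commute mult.commute)
  then show ?thesis using cv2_main[OF T' h w0 D'] img sw by (simp add: G_def)
qed

lemma FTC_ind: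
  fixes F f :: "real \<Rightarrow> real"
  assumes "a \<le> b" "\<And>x. (F has_real_derivative f x) (at x)" "continuous_on UNIV f"
  shows "(\<integral>x. indicator {a..b} x * f x \<partial>lborel) = F b - F a"
proof -
  have "(\<integral>x. indicator {a..b} x *\<^sub>R f x \<partial>lborel) = F b - F a"
    by (rule integral_FTC_atLeastAtMost[OF assms(1)])
       (use assms in \<open>auto simp: has_real_derivative_iff_has_vector_derivative[symmetric] intro: has_field_derivative_at_within continuous_on_subset\<close>)
  then show ?thesis by simp
qed

lemma int_ind01:
  fixes f :: "real \<Rightarrow> real"
  assumes "continuous_on UNIV f"
  shows "integrable lborel (\<lambda>x. indicator {0..1} x * f x)"
proof -
  have "integrable lborel (\<lambda>x. indicator {0..1} x *\<^sub>R f x)"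
    by (rule borel_integrable_compact) (use assms in \<open>auto intro: continuous_on_subset\<close>)
  then show ?thesis by simp
qed

definition stdT :: "(real \<times> real) set" where
  "stdT = {z. 0 \<le> fst z \<and> 0 \<le> snd z \<and> fst z + snd z \<le> 1}"

lemma compact_stdT: "compact stdT"
proof -
  have "closed stdT" unfolding stdT_def
    by (intro closed_Collect_conj closed_Collect_le continuous_intros)
  moreover have "stdT \<subseteq> cball 0 2"
  proof
    fix z assume "z \<in> stdT"
    then have "0 \<le> fst z" "0 \<le> snd z" "fst z \<le> 1" "snd z \<le> 1" by (auto simp: stdT_def)
    then have "norm z \<le> norm (fst z) + norm (snd z)" using norm_Pair_le[of "fst z" "snd z"] by simp
    then show "z \<in> cball 0 2" using \<open>fst z \<le> 1\<close> \<open>snd z \<le> 1\<close> \<open>0 \<le> fst z\<close> \<open>0 \<le> snd z\<close> by (simp add: dist_norm)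
  qed
  ultimately show ?thesis using bounded_cball bounded_subset compact_eq_bounded_closed by blast
qed

lemma green_std:
  fixes A C A' C' :: "real \<times> real \<Rightarrow> real"
  assumes dA: "\<And>s r. ((\<lambda>s. A (s,r)) has_real_derivative A' (s,r)) (at s)"
    and dC: "\<And>s r. ((\<lambda>r. C (s,r)) has_real_derivative C' (s,r)) (at r)"
    and cA: "continuous_on UNIV A" and cC: "continuous_on UNIV C"
    and cA': "continuous_on UNIV A'" and cC': "continuous_on UNIV C'"
  shows "(\<integral>z. indicator stdT z * (A' z - C' z) \<partial>lborel) =
     (\<integral>r. indicator {0..1} r * (A (1-r,r) - C (1-r,r)) \<partial>lborel)
     - (\<integral>r. indicator {0..1} r * A (0,r) \<partial>lborel) + (\<integral>s. indicator {0..1} s * C (s,0) \<partial>lborel)"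
proof -
  have iA: "integrable lborel (\<lambda>z. indicator stdT z * A' z)"
    using borel_integrable_compact[OF compact_stdT continuous_on_subset[OF cA']] by simp
  have iC: "integrable lborel (\<lambda>z. indicator stdT z * C' z)"
    using borel_integrable_compact[OF compact_stdT continuous_on_subset[OF cC']] by simp
  have ind: "indicator stdT (s,r) = (indicator {0..1} r * indicator {0..1-r} s :: real)" for s r
    by (auto simp: stdT_def indicator_def)
  have ind2: "indicator stdT (s,r) = (indicator {0..1} s * indicator {0..1-s} r :: real)" for s r
    by (auto simp: stdT_def indicator_def)
  have contp: "continuous_on UNIV (\<lambda>x::real. (a x, b x))" if "continuous_on UNIV a" "continuous_on UNIV b" for a b :: "real \<Rightarrow> real"
    using that by (intro continuous_intros)
  have cA1: "continuous_on UNIV (\<lambda>r. A (1-r,r))" by (rule continuous_on_compose2[OF cA]) (auto intro!: continuous_intros)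
  have cC1: "continuous_on UNIV (\<lambda>r. C (1-r,r))" by (rule continuous_on_compose2[OF cC]) (auto intro!: continuous_intros)
  have cA0: "continuous_on UNIV (\<lambda>r. A (0,r))" by (rule continuous_on_compose2[OF cA]) (auto intro!: continuous_intros)
  have cC0: "continuous_on UNIV (\<lambda>s. C (s,0))" by (rule continuous_on_compose2[OF cC]) (auto intro!: continuous_intros)
  have cA'r: "continuous_on UNIV (\<lambda>s. A' (s,r))" for r by (rule continuous_on_compose2[OF cA']) (auto intro!: continuous_intros)
  have cC's: "continuous_on UNIV (\<lambda>r. C' (s,r))" for s by (rule continuous_on_compose2[OF cC']) (auto intro!: continuous_intros)
  have "(\<integral>z. indicator stdT z * A' z \<partial>lborel) = (\<integral>r. \<integral>s. indicator stdT (s,r) * A' (s,r) \<partial>lborel \<partial>lborel)"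
    using lborel_pair.integral_snd[of "\<lambda>s r. indicator stdT (s,r) * A' (s,r)"] iA by (simp add: lborel_prod case_prod_beta')
  also have "\<dots> = (\<integral>r. indicator {0..1} r * (A (1-r,r) - A (0,r)) \<partial>lborel)"
  proof -
    have "(\<integral>s. indicator stdT (s,r) * A' (s,r) \<partial>lborel) = indicator {0..1} r * (A (1-r,r) - A (0,r))" for r
    proof (cases "r \<in> {0..1}")
      case True
      have "(\<integral>s. indicator stdT (s,r) * A' (s,r) \<partial>lborel) = (\<integral>s. indicator {0..1-r} s * A' (s,r) \<partial>lborel)"
        using True by (simp add: ind)
      also have "\<dots> = A (1-r,r) - A (0,r)"
        by (rule FTC_ind[where F="\<lambda>s. A (s,r)"]) (use True dA cA'r in auto)
      finally show ?thesis using True by simp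
    next
      case False then show ?thesis by (simp add: ind)
    qed
    then show ?thesis by simp
  qed
  also have "\<dots> = (\<integral>r. indicator {0..1} r * A (1-r,r) \<partial>lborel) - (\<integral>r. indicator {0..1} r * A (0,r) \<partial>lborel)"
    using int_ind01[OF cA1] int_ind01[OF cA0] by (simp add: right_diff_distrib)
  finally have EA: "(\<integral>z. indicator stdT z * A' z \<partial>lborel) = (\<integral>r. indicator {0..1} r * A (1-r,r) \<partial>lborel) - (\<integral>r. indicator {0..1} r * A (0,r) \<partial>lborel)" .
  have "(\<integral>z. indicator stdT z * C' z \<partial>lborel) = (\<integral>s. \<integral>r. indicator stdT (s,r) * C' (s,r) \<partial>lborel \<partial>lborel)"
    using lborel_pair.integral_fst'[of "\<lambda>z. indicator stdT z * C' z"] iC by (simp add: lborel_prod)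
  also have "\<dots> = (\<integral>s. indicator {0..1} s * (C (s,1-s) - C (s,0)) \<partial>lborel)"
  proof -
    have "(\<integral>r. indicator stdT (s,r) * C' (s,r) \<partial>lborel) = indicator {0..1} s * (C (s,1-s) - C (s,0))" for s
    proof (cases "s \<in> {0..1}")
      case True
      have "(\<integral>r. indicator stdT (s,r) * C' (s,r) \<partial>lborel) = (\<integral>r. indicator {0..1-s} r * C' (s,r) \<partial>lborel)"
        using True by (simp add: ind2)
      also have "\<dots> = C (s,1-s) - C (s,0)"
        by (rule FTC_ind[where F="\<lambda>r. C (s,r)"]) (use True dC cC's in auto)
      finally show ?thesis using True by simp
    next
      case False then show ?thesis by (simp add: ind2)
    qed
    then show ?thesis by simp
  qed
  also have "\<dots> = (\<integral>s. indicator {0..1} s * C (s,1-s) \<partial>lborel) - (\<integral>s. indicator {0..1} s * C (s,0) \<partial>lborel)"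
  proof -
    have cC2: "continuous_on UNIV (\<lambda>s. C (s,1-s))" by (rule continuous_on_compose2[OF cC]) (auto intro!: continuous_intros)
    show ?thesis using int_ind01[OF cC2] int_ind01[OF cC0] by (simp add: right_diff_distrib)
  qed
  also have "(\<integral>s. indicator {0..1} s * C (s,1-s) \<partial>lborel) = (\<integral>r. indicator {0..1} r * C (1-r,r) \<partial>lborel)"
  proof -
    have "(\<integral>s. indicator {0..1} s * C (s,1-s) \<partial>lborel) = \<bar>-1\<bar> *\<^sub>R (\<integral>r. indicator {0..1} (1 + -1 * r) * C (1 + -1*r, 1 - (1 + -1*r)) \<partial>lborel)"
      by (rule lborel_integral_real_affine) simp
    also have "\<dots> = (\<integral>r. indicator {0..1} r * C (1-r,r) \<partial>lborel)"
    proof -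
      have e: "\<And>r. indicator {0..1} (1 + -1 * r) * C (1 + -1*r, 1 - (1 + -1*r)) = (indicator {0..1} r * C (1-r,r) :: real)"
        by (auto simp: indicator_def)
      show ?thesis by (simp only: e) simp
    qed
    finally show ?thesis .
  qed
  finally have EC: "(\<integral>z. indicator stdT z * C' z \<partial>lborel) = (\<integral>r. indicator {0..1} r * C (1-r,r) \<partial>lborel) - (\<integral>s. indicator {0..1} s * C (s,0) \<partial>lborel)" .
  have "(\<integral>z. indicator stdT z * (A' z - C' z) \<partial>lborel) = (\<integral>z. indicator stdT z * A' z \<partial>lborel) - (\<integral>z. indicator stdT z * C' z \<partial>lborel)"
    using iA iC by (simp add: right_diff_distrib)
  also have "(\<integral>r. indicator {0..1} r * (A (1-r,r) - C (1-r,r)) \<partial>lborel) = (\<integral>r. indicator {0..1} r * A (1-r,r) \<partial>lborel) - (\<integral>r. indicator {0..1} r * C (1-r,r) \<partial>lborel)"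
    using int_ind01[OF cA1] int_ind01[OF cC1] by (simp add: right_diff_distrib)
  ultimately show ?thesis using EA EC by simp
qed

lemma rpf_deriv:
  fixes f :: "'a::real_normed_vector \<Rightarrow> real"
  assumes "real_polynomial_function f"
  shows "\<exists>D. (\<forall>x. (f has_derivative D x) (at x)) \<and> (\<forall>u. real_polynomial_function (\<lambda>x. D x u))"
  using assms
proof (induction f rule: real_polynomial_function.induct)
  case (linear f)
  then show ?case
    by (intro exI[of _ "\<lambda>x. f"]) (auto intro: bounded_linear_imp_has_derivative)
next
  case (const c)
  then show ?case by (intro exI[of _ "\<lambda>x u. 0"]) auto
next
  case (add f g)
  then obtain Df Dg where f: "\<forall>x. (f has_derivative Df x) (at x)" "\<forall>u. real_polynomial_function (\<lambda>x. Df x u)"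
    and g: "\<forall>x. (g has_derivative Dg x) (at x)" "\<forall>u. real_polynomial_function (\<lambda>x. Dg x u)" by blast
  show ?case
    by (intro exI[of _ "\<lambda>x u. Df x u + Dg x u"]) (use f g in \<open>auto intro!: derivative_eq_intros\<close>)
next
  case (mult f g)
  then obtain Df Dg where f: "\<forall>x. (f has_derivative Df x) (at x)" "\<forall>u. real_polynomial_function (\<lambda>x. Df x u)"
    and g: "\<forall>x. (g has_derivative Dg x) (at x)" "\<forall>u. real_polynomial_function (\<lambda>x. Dg x u)" by blast
  show ?case
    by (intro exI[of _ "\<lambda>x u. f x * Dg x u + Df x u * g x"])
       (use f g mult.hyps in \<open>auto intro!: has_derivative_mult real_polynomial_function.intros(3,4)\<close>)
qed

lemma rpf_cont: "real_polynomial_function f \<Longrightarrow> continuous_on UNIV f"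
  using continuous_real_polymonial_function continuous_at_imp_continuous_on by blast

lemma line_deriv:
  fixes f :: "'a::real_normed_vector \<Rightarrow> real"
  assumes "\<And>y. (f has_derivative D y) (at y)"
  shows "((\<lambda>s. f (a + s *\<^sub>R u)) has_real_derivative D (a + s *\<^sub>R u) u) (at s)"
proof -
  have lin: "linear (D y)" for y using assms has_derivative_linear by blast
  have "((\<lambda>s. f (a + s *\<^sub>R u)) has_derivative (\<lambda>h. D (a + s *\<^sub>R u) (h *\<^sub>R u))) (at s)"
    by (rule has_derivative_compose[of "\<lambda>s. a + s *\<^sub>R u", OF _ assms]) (auto intro!: derivative_eq_intros)
  moreover have "(\<lambda>h. D (a + s *\<^sub>R u) (h *\<^sub>R u)) = (\<lambda>h. h * D (a + s *\<^sub>R u) u)"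
    using lin[of "a + s *\<^sub>R u"] by (simp add: linear_scale)
  ultimately have "((\<lambda>s. f (a + s *\<^sub>R u)) has_derivative (\<lambda>h. h * D (a + s *\<^sub>R u) u)) (at s)" by simp
  moreover have "(\<lambda>h. h * D (a + s *\<^sub>R u) u) = (*) (D (a + s *\<^sub>R u) u)" by (auto simp: mult.commute)
  ultimately show ?thesis by (simp add: has_field_derivative_def)
qed

lemma dirderiv_eq:
  fixes f :: "real^'n::finite \<Rightarrow> real"
  assumes "\<And>y. (f has_derivative D y) (at y)"
  shows "dirderiv f x u = D x u"
proof -
  have "((\<lambda>s. f (x + s *\<^sub>R u)) has_real_derivative D (x + 0 *\<^sub>R u) u) (at 0)"
    by (rule line_deriv[OF assms])
  then show ?thesis unfolding dirderiv_def by (simp add: DERIV_imp_deriv)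
qed

lemma sint_tri:
  fixes p :: "nat \<Rightarrow> real^'n::finite" and g :: "real^'n \<Rightarrow> real"
  assumes abc: "a < b" "b < c"
    and ind: "\<forall>\<alpha> \<beta>. \<alpha> *\<^sub>R (p b - p a) + \<beta> *\<^sub>R (p c - p a) = 0 \<longrightarrow> \<alpha> = 0 \<and> \<beta> = 0"
    and g: "continuous_on UNIV g"
    and B: "onb p {a,b,c} = [b1,b2]" "b1 \<bullet> b1 = 1" "b2 \<bullet> b2 = 1" "b1 \<bullet> b2 = 0"
    and uB: "p b - p a = u0 *\<^sub>R b1 + u1 *\<^sub>R b2" and wB: "p c - p a = w0 *\<^sub>R b1 + w1 *\<^sub>R b2"
  shows "u0 * w1 - u1 * w0 \<noteq> 0"
    and "sint p {a,b,c} g = \<bar>u0 * w1 - u1 * w0\<bar> *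
           (\<integral>z. indicator stdT z * g (p a + fst z *\<^sub>R (p b - p a) + snd z *\<^sub>R (p c - p a)) \<partial>lborel)"
proof -
  define u where "u = p b - p a"
  define w where "w = p c - p a"
  have b21: "b2 \<bullet> b1 = 0" using B(4) by (simp add: inner_commute)
  show D: "u0 * w1 - u1 * w0 \<noteq> 0"
  proof
    assume D0: "u0 * w1 - u1 * w0 = 0"
    have "w1 *\<^sub>R u + (- u1) *\<^sub>R w = (u0 * w1 - u1 * w0) *\<^sub>R b1"
      by (simp add: u_def w_def uB wB algebra_simps)
    then have h: "w1 *\<^sub>R (p b - p a) + (- u1) *\<^sub>R (p c - p a) = 0" using D0 by (simp add: u_def w_def)
    have 1: "w1 = 0 \<and> u1 = 0" using ind[rule_format, OF h] by simp
    have "w0 *\<^sub>R u + (- u0) *\<^sub>R w = (u1 * w0 - u0 * w1) *\<^sub>R b2"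
      by (simp add: u_def w_def uB wB algebra_simps)
    then have h2: "w0 *\<^sub>R (p b - p a) + (- u0) *\<^sub>R (p c - p a) = 0" using D0 by (simp add: u_def w_def algebra_simps)
    have 2: "w0 = 0 \<and> u0 = 0" using ind[rule_format, OF h2] by simp
    have h3: "1 *\<^sub>R (p b - p a) + 0 *\<^sub>R (p c - p a) = 0" using 1 2 uB by simp
    show False using ind[rule_format, OF h3] by simp
  qed
  define P where "P = (\<lambda>z::real\<times>real. p a + fst z *\<^sub>R b1 + snd z *\<^sub>R b2)"
  define M where "M = (\<lambda>z::real\<times>real. (u0 * fst z + w0 * snd z, u1 * fst z + w1 * snd z))"
  define H where "H = convex hull {p a, p b, p c}"
  have cH: "closed H" unfolding H_def by (simp add: compact_imp_closed compact_convex_hull)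
  have PM: "P (M z) = p a + fst z *\<^sub>R u + snd z *\<^sub>R w" for z
    by (simp add: P_def M_def u_def w_def uB wB algebra_simps)
  have injP: "inj P"
  proof (rule injI)
    fix z z' assume "P z = P z'"
    then have e: "(fst z - fst z') *\<^sub>R b1 + (snd z - snd z') *\<^sub>R b2 = 0" by (simp add: P_def algebra_simps)
    have f1: "((fst z - fst z') *\<^sub>R b1 + (snd z - snd z') *\<^sub>R b2) \<bullet> b1 = fst z - fst z'"
      using B(2) b21 by (simp add: inner_add_left)
    have f2: "((fst z - fst z') *\<^sub>R b1 + (snd z - snd z') *\<^sub>R b2) \<bullet> b2 = snd z - snd z'"
      using B(3,4) by (simp add: inner_add_left)
    have "fst z - fst z' = 0" using f1 unfolding e by simp
    moreover have "snd z - snd z' = 0" using f2 unfolding e by simp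
    ultimately show "z = z'" by (simp add: prod_eq_iff)
  qed
  have Hs: "H = (\<lambda>z. P (M z)) ` stdT"
    unfolding H_def convex_hull_3_alt PM stdT_def u_def w_def by (auto simp: image_def)
  have indH: "indicator H (P z) = (indicator (M ` stdT) z :: real)" for z
  proof -
    have "P z \<in> H \<longleftrightarrow> z \<in> M ` stdT" unfolding Hs using injP by (auto simp: inj_eq image_iff)
    then show ?thesis by (simp add: indicator_def)
  qed
  have cP: "continuous_on UNIV P" unfolding P_def by (intro continuous_intros)
  have card: "card {a,b,c} = 3" and mn: "Min {a,b,c} = a" using abc by auto
  have sum2: "p a + (\<Sum>i<2. t i *\<^sub>R [b1,b2] ! i) = p a + t 0 *\<^sub>R b1 + t 1 *\<^sub>R b2" for t :: "nat \<Rightarrow> real"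
    by (simp add: numeral_2_eq_2 lessThan_Suc algebra_simps)
  have "sint p {a,b,c} g = (\<integral>t. indicator H (P (t 0, t 1)) * g (P (t 0, t 1)) \<partial>PiM {..<2::nat} (\<lambda>_. lborel))"
    by (simp add: sint_def Let_def B(1) card mn sum2 H_def simp_set_def P_def insert_commute)
  also have "\<dots> = (\<integral>z. indicator H (P (fst z, snd z)) * g (P (fst z, snd z)) \<partial>lborel)"
    by (rule PiM2_integral[where f="\<lambda>x y. indicator H (P (x,y)) * g (P (x,y))"])
       (use meas_ind_cont[OF cH cP g] in simp)
  also have "\<dots> = (\<integral>z. indicator (M ` stdT) z * (g \<circ> P) z \<partial>lborel)" by (simp add: indH)
  also have "\<dots> = \<bar>u0 * w1 - u1 * w0\<bar> * (\<integral>z. indicator stdT z * (g \<circ> P) (M z) \<partial>lborel)"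
  proof -
    have cgP: "continuous_on UNIV (g \<circ> P)" using continuous_on_compose2[OF g cP] by (simp add: o_def)
    show ?thesis unfolding M_def by (rule cv2[OF compact_stdT cgP D])
  qed
  finally show "sint p {a,b,c} g = \<bar>u0 * w1 - u1 * w0\<bar> *
           (\<integral>z. indicator stdT z * g (p a + fst z *\<^sub>R (p b - p a) + snd z *\<^sub>R (p c - p a)) \<partial>lborel)"
    by (simp add: PM u_def w_def)
qed

lemma extd0_single: "extd 0 \<phi> x [e] = dirderiv (\<lambda>y. \<phi> y []) x e"
  by (simp add: extd_def drop_nth_def)

lemma extd1_pair: "extd 1 \<phi> x [b1,b2] = dirderiv (\<lambda>y. \<phi> y [b2]) x b1 - dirderiv (\<lambda>y. \<phi> y [b1]) x b2"
  by (simp add: extd_def drop_nth_def numeral_2_eq_2 lessThan_Suc)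

lemma stokes_edge:
  fixes p :: "nat \<Rightarrow> real^'n::finite" and \<phi> :: "'n form"
  assumes ij: "i < j" and pij: "p i \<noteq> p j" and rpf: "real_polynomial_function (\<lambda>x. \<phi> x [])"
    and z1: "\<phi> (p i) [] = 0" and z2: "\<phi> (p j) [] = 0"
  shows "sint p {i,j} (\<lambda>x. extd 0 \<phi> x (onb p {i,j})) = 0"
proof -
  define v where "v = p j - p i"
  obtain c where e: "onb p {i,j} = [c *\<^sub>R v]" and c: "\<bar>c\<bar> * norm v = 1"
    using onb_edge[of i j p] ij pij by (auto simp: v_def)
  obtain D where D: "\<And>x. ((\<lambda>x. \<phi> x []) has_derivative D x) (at x)" and Dp: "\<And>u. real_polynomial_function (\<lambda>x. D x u)"
    using rpf_deriv[OF rpf] by blast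
  have lin: "linear (D x)" for x using D has_derivative_linear by blast
  have G: "extd 0 \<phi> x (onb p {i,j}) = c * D x v" for x
    by (simp add: e extd0_single dirderiv_eq[OF D] linear_scale[OF lin])
  have cG: "continuous_on UNIV (\<lambda>x. c * D x v)" using rpf_cont[OF Dp[of v]] by (intro continuous_intros)
  have cD: "continuous_on UNIV (\<lambda>s. D (p i + s *\<^sub>R v) v)"
    by (rule continuous_on_compose2[OF rpf_cont[OF Dp[of v]]]) (auto intro!: continuous_intros)
  have "sint p {i,j} (\<lambda>x. extd 0 \<phi> x (onb p {i,j})) = sint p {i,j} (\<lambda>x. c * D x v)"
    by (simp only: G)
  also have "\<dots> = norm v * (\<integral>s. indicator {0..1} s * (c * D (p i + s *\<^sub>R v) v) \<partial>lborel)"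
    using sint_edge[OF ij pij cG e[unfolded v_def] c[unfolded v_def]] by (simp add: v_def)
  also have "(\<integral>s. indicator {0..1} s * (c * D (p i + s *\<^sub>R v) v) \<partial>lborel)
      = c * (\<integral>s. indicator {0..1} s * D (p i + s *\<^sub>R v) v \<partial>lborel)"
    by (simp add: algebra_simps)
  also have "(\<integral>s. indicator {0..1} s * D (p i + s *\<^sub>R v) v \<partial>lborel) = \<phi> (p i + 1 *\<^sub>R v) [] - \<phi> (p i + 0 *\<^sub>R v) []"
    by (rule FTC_ind[OF _ line_deriv[OF D] cD]) simp
  also have "\<dots> = 0" using z1 z2 by (simp add: v_def)
  finally show ?thesis by simp
qed

lemma edge_zero:
  fixes p :: "nat \<Rightarrow> real^'n::finite" and \<phi> :: "'n form"
  assumes ij: "i < j" and pij: "p i \<noteq> p j"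
    and rpf: "\<And>y. real_polynomial_function (\<lambda>x. \<phi> x [y])"
    and lin: "\<And>x. linear (\<lambda>y. \<phi> x [y])"
    and z: "sint p {i,j} (\<lambda>x. \<phi> x (onb p {i,j})) = 0"
  shows "(\<integral>s. indicator {0..1} s * \<phi> (p i + s *\<^sub>R (p j - p i)) [p j - p i] \<partial>lborel) = 0"
proof -
  define v where "v = p j - p i"
  obtain c where e: "onb p {i,j} = [c *\<^sub>R v]" and c: "\<bar>c\<bar> * norm v = 1"
    using onb_edge[of i j p] ij pij by (auto simp: v_def)
  have G: "\<phi> x (onb p {i,j}) = c * \<phi> x [v]" for x
    using linear_scale[OF lin[of x], of c v] by (simp add: e)
  have cG: "continuous_on UNIV (\<lambda>x. c * \<phi> x [v])" using rpf_cont[OF rpf[of v]] by (intro continuous_intros)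
  have "0 = sint p {i,j} (\<lambda>x. c * \<phi> x [v])" using z by (simp only: G)
  also have "\<dots> = norm v * (\<integral>s. indicator {0..1} s * (c * \<phi> (p i + s *\<^sub>R v) [v]) \<partial>lborel)"
    using sint_edge[OF ij pij cG e[unfolded v_def] c[unfolded v_def]] by (simp add: v_def)
  also have "\<dots> = (norm v * c) * (\<integral>s. indicator {0..1} s * \<phi> (p i + s *\<^sub>R v) [v] \<partial>lborel)"
    by (simp add: algebra_simps)
  finally have "(norm v * c) * (\<integral>s. indicator {0..1} s * \<phi> (p i + s *\<^sub>R v) [v] \<partial>lborel) = 0" by simp
  moreover have "norm v * c \<noteq> 0" using c by auto
  ultimately show ?thesis by (simp add: v_def)
qed

lemma stokes_tri:
  fixes p :: "nat \<Rightarrow> real^'n::finite" and \<phi> :: "'n form"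
  assumes abc: "a < b" "b < c"
    and ind: "\<forall>\<alpha> \<beta>. \<alpha> *\<^sub>R (p b - p a) + \<beta> *\<^sub>R (p c - p a) = 0 \<longrightarrow> \<alpha> = 0 \<and> \<beta> = 0"
    and rpf: "\<And>y. real_polynomial_function (\<lambda>x. \<phi> x [y])"
    and lin: "\<And>x. linear (\<lambda>y. \<phi> x [y])"
    and zab: "sint p {a,b} (\<lambda>x. \<phi> x (onb p {a,b})) = 0"
    and zac: "sint p {a,c} (\<lambda>x. \<phi> x (onb p {a,c})) = 0"
    and zbc: "sint p {b,c} (\<lambda>x. \<phi> x (onb p {b,c})) = 0"
  shows "sint p {a,b,c} (\<lambda>x. extd 1 \<phi> x (onb p {a,b,c})) = 0"
proof -
  have d: "a \<noteq> b" "a \<noteq> c" "b \<noteq> c" using abc by auto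
  have pab: "p a \<noteq> p b" using ind[rule_format, of 1 0] by auto
  have pac: "p a \<noteq> p c" using ind[rule_format, of 0 1] by auto
  have pbc: "p b \<noteq> p c"
  proof
    assume "p b = p c"
    then have h: "1 *\<^sub>R (p b - p a) + (-1) *\<^sub>R (p c - p a) = 0" by simp
    show False using ind[rule_format, OF h] by simp
  qed
  obtain b1 b2 where B: "onb p {a,b,c} = [b1,b2]" "b1 \<bullet> b1 = 1" "b2 \<bullet> b2 = 1" "b1 \<bullet> b2 = 0"
    and uS: "p b - p a \<in> span {b1,b2}" and wS: "p c - p a \<in> span {b1,b2}"
    using onb_tri[OF d ind] by blast
  define u where "u = p b - p a"
  define w where "w = p c - p a"
  define u0 where "u0 = u \<bullet> b1"
  define u1 where "u1 = u \<bullet> b2"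
  define w0 where "w0 = w \<bullet> b1"
  define w1 where "w1 = w \<bullet> b2"
  have uB: "p b - p a = u0 *\<^sub>R b1 + u1 *\<^sub>R b2"
    using coords_on2[OF B(2-4) uS] by (simp add: u0_def u1_def u_def)
  have wB: "p c - p a = w0 *\<^sub>R b1 + w1 *\<^sub>R b2"
    using coords_on2[OF B(2-4) wS] by (simp add: w0_def w1_def w_def)
  define f1 where "f1 = (\<lambda>x. \<phi> x [b1])"
  define f2 where "f2 = (\<lambda>x. \<phi> x [b2])"
  obtain D1 where D1: "\<And>x. (f1 has_derivative D1 x) (at x)" and D1p: "\<And>v. real_polynomial_function (\<lambda>x. D1 x v)"
    using rpf_deriv[OF rpf[of b1]] unfolding f1_def[symmetric] by blast
  obtain D2 where D2: "\<And>x. (f2 has_derivative D2 x) (at x)" and D2p: "\<And>v. real_polynomial_function (\<lambda>x. D2 x v)"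
    using rpf_deriv[OF rpf[of b2]] unfolding f2_def[symmetric] by blast
  have lD1: "linear (D1 x)" for x using D1 has_derivative_linear by blast
  have lD2: "linear (D2 x)" for x using D2 has_derivative_linear by blast
  define g where "g = (\<lambda>x. D2 x b1 - D1 x b2)"
  have gE: "extd 1 \<phi> x (onb p {a,b,c}) = g x" for x
    unfolding B(1) extd1_pair f1_def[symmetric] f2_def[symmetric] g_def
    using dirderiv_eq[OF D1] dirderiv_eq[OF D2] by simp
  have cg: "continuous_on UNIV g" unfolding g_def
    using rpf_cont[OF D1p[of b2]] rpf_cont[OF D2p[of b1]] by (intro continuous_intros)
  note st = sint_tri[OF abc ind cg B uB wB]
  define Dt where "Dt = u0 * w1 - u1 * w0"
  have Dt0: "Dt \<noteq> 0" using st(1) by (simp add: Dt_def)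
  define F where "F = (\<lambda>z::real\<times>real. p a + fst z *\<^sub>R u + snd z *\<^sub>R w)"
  have cF: "continuous_on UNIV F" unfolding F_def by (intro continuous_intros)
  have phiB: "\<phi> x [\<alpha> *\<^sub>R b1 + \<beta> *\<^sub>R b2] = \<alpha> * f1 x + \<beta> * f2 x" for x \<alpha> \<beta>
    using linear_add[OF lin[of x]] linear_scale[OF lin[of x]] by (simp add: f1_def f2_def)
  have D1B: "D1 x (\<alpha> *\<^sub>R b1 + \<beta> *\<^sub>R b2) = \<alpha> * D1 x b1 + \<beta> * D1 x b2" for x \<alpha> \<beta>
    using linear_add[OF lD1[of x]] linear_scale[OF lD1[of x]] by simp
  have D2B: "D2 x (\<alpha> *\<^sub>R b1 + \<beta> *\<^sub>R b2) = \<alpha> * D2 x b1 + \<beta> * D2 x b2" for x \<alpha> \<beta>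
    using linear_add[OF lD2[of x]] linear_scale[OF lD2[of x]] by simp
  define A where "A = (\<lambda>z. w0 * f1 (F z) + w1 * f2 (F z))"
  define C where "C = (\<lambda>z. u0 * f1 (F z) + u1 * f2 (F z))"
  define A' where "A' = (\<lambda>z. w0 * D1 (F z) u + w1 * D2 (F z) u)"
  define C' where "C' = (\<lambda>z. u0 * D1 (F z) w + u1 * D2 (F z) w)"
  have AE: "A z = \<phi> (F z) [w]" for z unfolding A_def using phiB by (simp add: w_def wB)
  have CE: "C z = \<phi> (F z) [u]" for z unfolding C_def using phiB by (simp add: u_def uB)
  have AC: "A' z - C' z = Dt * g (F z)" for z
    unfolding A'_def C'_def Dt_def g_def
    by (simp add: u_def w_def uB wB D1B D2B algebra_simps)
  have dA: "((\<lambda>s. A (s,r)) has_real_derivative A' (s,r)) (at s)" for s r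
  proof -
    have e: "F (s',r) = (p a + r *\<^sub>R w) + s' *\<^sub>R u" for s' by (simp add: F_def algebra_simps)
    have d1: "((\<lambda>s. f1 (F (s,r))) has_real_derivative D1 (F (s,r)) u) (at s)"
      unfolding e by (rule line_deriv[OF D1])
    have d2: "((\<lambda>s. f2 (F (s,r))) has_real_derivative D2 (F (s,r)) u) (at s)"
      unfolding e by (rule line_deriv[OF D2])
    show ?thesis unfolding A_def A'_def by (intro DERIV_add DERIV_cmult d1 d2)
  qed
  have dC: "((\<lambda>r. C (s,r)) has_real_derivative C' (s,r)) (at r)" for s r
  proof -
    have e: "F (s,r') = (p a + s *\<^sub>R u) + r' *\<^sub>R w" for r' by (simp add: F_def algebra_simps)
    have d1: "((\<lambda>r. f1 (F (s,r))) has_real_derivative D1 (F (s,r)) w) (at r)"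
      unfolding e by (rule line_deriv[OF D1])
    have d2: "((\<lambda>r. f2 (F (s,r))) has_real_derivative D2 (F (s,r)) w) (at r)"
      unfolding e by (rule line_deriv[OF D2])
    show ?thesis unfolding C_def C'_def by (intro DERIV_add DERIV_cmult d1 d2)
  qed
  have cf1': "continuous_on UNIV f1" unfolding f1_def by (rule rpf_cont[OF rpf])
  have cf2': "continuous_on UNIV f2" unfolding f2_def by (rule rpf_cont[OF rpf])
  have cf1: "continuous_on UNIV (\<lambda>z. f1 (F z))"
    by (rule continuous_on_compose2[OF cf1' cF]) auto
  have cf2: "continuous_on UNIV (\<lambda>z. f2 (F z))"
    by (rule continuous_on_compose2[OF cf2' cF]) auto
  have cD: "continuous_on UNIV (\<lambda>z. Di (F z) v)" if "\<And>v. real_polynomial_function (\<lambda>x. Di x v)" for Di v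
    by (rule continuous_on_compose2[OF rpf_cont[OF that] cF]) auto
  have cA: "continuous_on UNIV A" unfolding A_def using cf1 cf2 by (intro continuous_intros)
  have cC: "continuous_on UNIV C" unfolding C_def using cf1 cf2 by (intro continuous_intros)
  have cA': "continuous_on UNIV A'" unfolding A'_def using cD[of D1 u, OF D1p] cD[of D2 u, OF D2p] by (intro continuous_intros)
  have cC': "continuous_on UNIV C'" unfolding C'_def using cD[of D1 w, OF D1p] cD[of D2 w, OF D2p] by (intro continuous_intros)
  note gr = green_std[OF dA dC cA cC cA' cC']
  have T1: "(\<integral>r. indicator {0..1} r * (A (1-r,r) - C (1-r,r)) \<partial>lborel) = 0"
  proof -
    have "A (1-r,r) - C (1-r,r) = \<phi> (p b + r *\<^sub>R (p c - p b)) [p c - p b]" for r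
    proof -
      have "A (1-r,r) - C (1-r,r) = \<phi> (F (1-r,r)) [w - u]"
        unfolding AE CE using linear_diff[OF lin[of "F (1-r,r)"], of w u] by simp
      moreover have "F (1-r,r) = p b + r *\<^sub>R (p c - p b)" by (simp add: F_def u_def w_def algebra_simps)
      moreover have "w - u = p c - p b" by (simp add: u_def w_def)
      ultimately show ?thesis by simp
    qed
    then show ?thesis using edge_zero[OF abc(2) pbc rpf lin zbc] by simp
  qed
  have T2: "(\<integral>r. indicator {0..1} r * A (0,r) \<partial>lborel) = 0"
  proof -
    have "A (0,r) = \<phi> (p a + r *\<^sub>R (p c - p a)) [p c - p a]" for r by (simp add: AE F_def w_def)
    then show ?thesis using edge_zero[OF _ pac rpf lin zac] abc by simp
  qed
  have T3: "(\<integral>s. indicator {0..1} s * C (s,0) \<partial>lborel) = 0"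
  proof -
    have "C (s,0) = \<phi> (p a + s *\<^sub>R (p b - p a)) [p b - p a]" for s by (simp add: CE F_def u_def)
    then show ?thesis using edge_zero[OF abc(1) pab rpf lin zab] by simp
  qed
  have "(\<integral>z. indicator stdT z * (A' z - C' z) \<partial>lborel) = 0" using gr T1 T2 T3 by simp
  then have "Dt * (\<integral>z. indicator stdT z * g (F z) \<partial>lborel) = 0" by (simp add: AC algebra_simps)
  then have I0: "(\<integral>z. indicator stdT z * g (F z) \<partial>lborel) = 0" using Dt0 by simp
  have gE': "(\<lambda>x. extd 1 \<phi> x (onb p {a,b,c})) = g" by (rule ext) (rule gE)
  show ?thesis unfolding gE' using st(2) I0 by (simp add: F_def u_def w_def)
qed

lemma card2_sorted:
  fixes V :: "nat set"
  assumes "finite V" "card V = 2"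
  obtains i j where "V = {i,j}" "i < j"
proof -
  define xs where "xs = sorted_list_of_set V"
  have s: "set xs = V" "length xs = 2" "sorted_wrt (<) xs"
    using assms by (auto simp: xs_def)
  from s(2) obtain i j where x: "xs = [i,j]"
    by (auto simp: numeral_2_eq_2 length_Suc_conv)
  have "V = {i,j}" using s(1) x by simp
  moreover have "i < j" using s(3) x by simp
  ultimately show ?thesis by (rule that)
qed

lemma card3_sorted:
  fixes V :: "nat set"
  assumes "finite V" "card V = 3"
  obtains a b c where "V = {a,b,c}" "a < b" "b < c"
proof -
  define xs where "xs = sorted_list_of_set V"
  have s: "set xs = V" "length xs = 3" "sorted_wrt (<) xs"
    using assms by (auto simp: xs_def)
  from s(2) obtain a b c where x: "xs = [a,b,c]"
    by (auto simp: numeral_3_eq_3 length_Suc_conv)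
  have "V = {a,b,c}" using s(1) x by simp
  moreover have "a < b" "b < c" using s(3) x by simp_all
  ultimately show ?thesis by (rule that)
qed

lemma dual_basis_prop:
  fixes p :: "nat \<Rightarrow> real^'n::finite"
  assumes "unisolvent p X \<psi> N m"
  shows "dual_basis p X \<psi> N m i \<in> X m \<and>
    (\<forall>i'\<in>dof_idx CARD('n) N m. dof p \<psi> m i' (dual_basis p X \<psi> N m i) = (if i' = i then 1 else 0))"
  and "\<And>v. v \<in> X m \<Longrightarrow> (\<forall>i'\<in>dof_idx CARD('n) N m. dof p \<psi> m i' v = (if i' = i then 1 else 0))
          \<Longrightarrow> dual_basis p X \<psi> N m i = v"
proof -
  have ex: "\<exists>!v. v \<in> X m \<and> (\<forall>i'\<in>dof_idx CARD('n) N m. dof p \<psi> m i' v = (if i' = i then 1 else 0))"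
    using spec[OF assms[unfolded unisolvent_def], of "\<lambda>i'. if i' = i then 1 else 0"] by simp
  show "dual_basis p X \<psi> N m i \<in> X m \<and>
    (\<forall>i'\<in>dof_idx CARD('n) N m. dof p \<psi> m i' (dual_basis p X \<psi> N m i) = (if i' = i then 1 else 0))"
    unfolding dual_basis_def by (rule theI'[OF ex])
  show "dual_basis p X \<psi> N m i = v" if "v \<in> X m" "\<forall>i'\<in>dof_idx CARD('n) N m. dof p \<psi> m i' v = (if i' = i then 1 else 0)" for v
    unfolding dual_basis_def
    apply (rule the1_equality[OF ex])
    apply (rule conjI)
     apply (rule that(1))
    apply (rule that(2))
    done
qed

lemma l2_zero: "l2 p V k a (\<lambda>x vs. 0) = 0"
  by (simp add: l2_def finner_def sint_def Let_def)

lemma idx_TI1: "V \<in> Delta d m \<Longrightarrow> (TI,V,1) \<in> dof_idx d N m"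
  unfolding dof_idx_def by blast

lemma idx_TI2: "V \<in> Delta d l \<Longrightarrow> m + 1 \<le> l \<Longrightarrow> l \<le> d \<Longrightarrow> 1 \<le> j \<Longrightarrow> j \<le> N m V \<Longrightarrow> (TI,V,j) \<in> dof_idx d N m"
  unfolding dof_idx_def by blast

lemma idx_cases:
  assumes "i \<in> dof_idx d N m"
  obtains (A) V where "i = (TI,V,1)" "V \<in> Delta d m"
    | (B) V j l where "i = (TI,V,j)" "m + 1 \<le> l" "l \<le> d" "V \<in> Delta d l" "1 \<le> j" "j \<le> N m V"
    | (C) V j l where "i = (TII,V,j)" "1 \<le> m" "m \<le> l" "l \<le> d" "V \<in> Delta d l" "1 \<le> j" "j \<le> N (m - 1) V"
  using assms unfolding dof_idx_def by blast

lemma dof_TI: "dof p \<psi> m (TI,V,j) v = (if card V = Suc m then sint p V (\<lambda>x. v x (onb p V))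
                     else l2 p V (Suc m) (extd m (\<psi> m V j)) (extd m v))"
  by (simp add: dof_def)

lemma dof_TII: "dof p \<psi> m (TII,V,j) v = l2 p V m (extd (m - 1) (\<psi> (m - 1) V j)) v"
  by (simp add: dof_def)

lemma Delta_D: "V \<in> Delta d l \<Longrightarrow> V \<subseteq> {..d} \<and> card V = Suc l \<and> finite V"
  unfolding Delta_def using finite_subset by auto

theorem mainTheorem4:
  fixes p :: "nat \<Rightarrow> real^'n"
    and X :: "nat \<Rightarrow> 'n form set"
    and \<psi> :: "nat \<Rightarrow> nat set \<Rightarrow> nat \<Rightarrow> 'n form"
    and N :: "nat \<Rightarrow> nat set \<Rightarrow> nat"
    and k l n :: nat and S :: "nat set"
  assumes "CARD('n) = 2 \<or> CARD('n) = 3"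
    and "ref_simplex p"
    and "poly_complex CARD('n) X"
    and "\<forall>m<CARD('n). \<forall>l'. m < l' \<and> l' \<le> CARD('n) \<longrightarrow>
           (\<forall>V\<in>Delta CARD('n) l'. psi_basis p X m V (N m V) (\<psi> m V))"
    and "\<forall>m\<le>CARD('n). unisolvent p X \<psi> N m"
    and "1 \<le> k" and "k \<le> CARD('n) - 1"
    and "k \<le> l" and "l \<le> CARD('n)"
    and "S \<in> Delta CARD('n) l"
    and "1 \<le> n" and "n \<le> N (k - 1) S"
  shows "dual_basis p X \<psi> N k (TII, S, n) = extd (k - 1) (dual_basis p X \<psi> N (k - 1) (TI, S, n))"
proof -
  define d where "d = CARD('n)"
  have d23: "d = 2 \<or> d = 3" using assms(1) by (simp add: d_def)
  have k1: "1 \<le> k" and kd: "k \<le> d - 1" and kl: "k \<le> l" and ld: "l \<le> d" using assms(6-9) by (auto simp: d_def)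
  have SD: "S \<in> Delta d l" using assms(10) by (simp add: d_def)
  have cS: "card S = Suc l" using Delta_D[OF SD] by simp
  have uk1: "unisolvent p X \<psi> N (k - 1)" using assms(5) kd by (simp add: d_def)
  have uk: "unisolvent p X \<psi> N k" using assms(5) kd by (simp add: d_def)
  have inj: "inj_on p {..d}" and aff: "\<not> affine_dependent (p ` {..d})"
    using assms(2) by (auto simp: ref_simplex_def d_def)
  have PC: "(\<forall>m\<le>d. (\<lambda>x vs. 0) \<in> X m \<and>
        (\<forall>v\<in>X m. \<forall>w\<in>X m. (\<lambda>x vs. v x vs + w x vs) \<in> X m) \<and>
        (\<forall>c. \<forall>v\<in>X m. (\<lambda>x vs. c * v x vs) \<in> X m) \<and>
        (\<forall>v\<in>X m. poly_form m v)) \<and>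
     (\<forall>m<d. extd m ` X m \<subseteq> X (Suc m)) \<and>
     {v \<in> X 0. extd 0 v = (\<lambda>x vs. 0)} = {(\<lambda>x vs. if vs = [] then c else 0) | c. True} \<and>
     (\<forall>m. 1 \<le> m \<and> m \<le> d \<longrightarrow> {v \<in> X m. extd m v = (\<lambda>x vs. 0)} = extd (m - 1) ` X (m - 1))"
    using assms(3) unfolding poly_complex_def d_def by blast
  have pcpoly: "\<And>m v. m \<le> d \<Longrightarrow> v \<in> X m \<Longrightarrow> poly_form m v" using PC by blast
  have pcd: "\<And>m. m < d \<Longrightarrow> extd m ` X m \<subseteq> X (Suc m)" using PC by blast
  have pcex: "\<And>m. 1 \<le> m \<Longrightarrow> m \<le> d \<Longrightarrow> {v \<in> X m. extd m v = (\<lambda>x vs. 0)} = extd (m - 1) ` X (m - 1)"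
    using PC by blast
  define \<phi> where "\<phi> = dual_basis p X \<psi> N (k - 1) (TI, S, n)"
  have \<phi>X: "\<phi> \<in> X (k - 1)" and \<phi>dof: "\<forall>i'\<in>dof_idx d N (k - 1). dof p \<psi> (k - 1) i' \<phi> = (if i' = (TI,S,n) then 1 else 0)"
    using dual_basis_prop(1)[OF uk1, of "(TI,S,n)"] unfolding \<phi>_def d_def by auto
  define w where "w = extd (k - 1) \<phi>"
  have wX: "w \<in> X k"
  proof -
    have lt: "k - 1 < d" using kd k1 d23 by auto
    have "w \<in> extd (k - 1) ` X (k - 1)" using \<phi>X by (simp add: w_def)
    then have "w \<in> X (Suc (k - 1))" using pcd[OF lt] by blast
    then show ?thesis using k1 by simp
  qed
  have wker: "extd k w = (\<lambda>x vs. 0)"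
  proof -
    have "w \<in> extd (k - 1) ` X (k - 1)" using \<phi>X by (simp add: w_def)
    then have "w \<in> {v \<in> X k. extd k v = (\<lambda>x vs. 0)}" using pcex[of k] k1 kd by simp
    then show ?thesis by simp
  qed
  have \<phi>poly: "poly_form (k - 1) \<phi>" using pcpoly[OF _ \<phi>X] kd by simp
  have dofw: "dof p \<psi> k i' w = (if i' = (TII,S,n) then 1 else 0)" if i': "i' \<in> dof_idx d N k" for i'
    using i'
  proof (cases rule: idx_cases)
    case (A V)
    have VD: "V \<subseteq> {..d}" "card V = Suc k" "finite V" using Delta_D[OF A(2)] by auto
    have "sint p V (\<lambda>x. w x (onb p V)) = 0"
    proof (cases "k = 1")
      case True
      obtain i j where V: "V = {i,j}" "i < j" using card2_sorted[of V] VD True by auto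
      have ij: "i \<le> d" "j \<le> d" using VD V by auto
      have pij: "p i \<noteq> p j" using inj ij V(2) by (auto dest: inj_onD)
      have rpf: "real_polynomial_function (\<lambda>x. \<phi> x [])" using \<phi>poly by (simp add: poly_form_def)
      have vz: "\<phi> (p x) [] = 0" if "x \<le> d" for x
      proof -
        have xD: "{x} \<in> Delta d 0" using that by (simp add: Delta_def)
        have "(TI,{x},1) \<in> dof_idx d N (k - 1)" using idx_TI1[OF xD] True by simp
        then have "dof p \<psi> (k - 1) (TI,{x},1) \<phi> = 0" using \<phi>dof cS kl True by auto
        then show ?thesis using True by (simp add: dof_TI sint_vertex onb_vertex)
      qed
      show ?thesis unfolding V(1) w_def using True stokes_edge[where i=i and j=j and p=p and \<phi>=\<phi>, OF V(2) pij rpf vz[OF ij(1)] vz[OF ij(2)]] by simp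
    next
      case False
      then have k2: "k = 2" and d3: "d = 3" using kd k1 d23 by auto
      obtain a b c where V: "V = {a,b,c}" "a < b" "b < c" using card3_sorted[of V] VD k2 by auto
      have abcd: "a \<le> d" "b \<le> d" "c \<le> d" using VD V by auto
      have pd: "p a \<noteq> p b" "p a \<noteq> p c" "p b \<noteq> p c" using inj abcd V(2,3) by (auto dest: inj_onD)
      have "\<not> affine_dependent {p a, p b, p c}"
        by (rule affine_independent_subset[OF aff]) (use abcd in auto)
      then have ind: "\<forall>\<alpha> \<beta>. \<alpha> *\<^sub>R (p b - p a) + \<beta> *\<^sub>R (p c - p a) = 0 \<longrightarrow> \<alpha> = 0 \<and> \<beta> = 0"
        using indep2_of_affine pd by blast
      have rpf: "\<And>y. real_polynomial_function (\<lambda>x. \<phi> x [y])" using \<phi>poly k2 by (simp add: poly_form_def)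
      have lin: "linear (\<lambda>y. \<phi> x [y])" for x
      proof -
        have "alt_form 1 (\<phi> x)" using \<phi>poly k2 by (simp add: poly_form_def)
        then have "\<forall>vs. length vs = 1 \<longrightarrow> (\<forall>i<1. linear (\<lambda>u. \<phi> x (vs[i := u])))"
          unfolding alt_form_def by blast
        then have "linear (\<lambda>u. \<phi> x ([0][0 := u]))"
          by (rule allE[where x="[0]"]) simp
        then show ?thesis by simp
      qed
      have ez: "sint p {x,y} (\<lambda>z. \<phi> z (onb p {x,y})) = 0" if "x < y" "x \<le> d" "y \<le> d" for x y
      proof -
        have xD: "{x,y} \<in> Delta d 1" using that by (simp add: Delta_def)
        have "(TI,{x,y},1) \<in> dof_idx d N (k - 1)" using idx_TI1[OF xD] k2 by simp
        then have "dof p \<psi> (k - 1) (TI,{x,y},1) \<phi> = 0" using \<phi>dof cS kl k2 that by auto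
        then show ?thesis using k2 that by (simp add: dof_TI)
      qed
      have e1: "sint p {a,b} (\<lambda>z. \<phi> z (onb p {a,b})) = 0" using ez V abcd by simp
      have e2: "sint p {a,c} (\<lambda>z. \<phi> z (onb p {a,c})) = 0" using ez V abcd by simp
      have e3: "sint p {b,c} (\<lambda>z. \<phi> z (onb p {b,c})) = 0" using ez V abcd by simp
      have "sint p {a,b,c} (\<lambda>x. extd 1 \<phi> x (onb p {a,b,c})) = 0"
        by (rule stokes_tri[where a=a and b=b and c=c and p=p and \<phi>=\<phi>, OF V(2,3) ind rpf lin e1 e2 e3])
      then show ?thesis unfolding V(1) w_def using k2 by simp
    qed
    then show ?thesis using A VD by (simp add: dof_TI)
  next
    case (B V j l')
    have VD: "card V = Suc l'" using Delta_D[OF B(4)] by auto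
    have "card V \<noteq> Suc k" using VD B(2) by simp
    then show ?thesis using B by (simp add: dof_TI wker l2_zero)
  next
    case (C V j l')
    have VD: "card V = Suc l'" using Delta_D[OF C(5)] by auto
    have idx: "(TI,V,j) \<in> dof_idx d N (k - 1)"
      by (rule idx_TI2[where m="k - 1" and N=N and V=V and j=j, OF C(5) _ C(4) C(6) C(7)]) (use C(3) k1 in simp)
    have "dof p \<psi> (k - 1) (TI,V,j) \<phi> = (if (TI,V,j) = (TI,S,n) then 1 else 0)" using \<phi>dof idx by blast
    moreover have "dof p \<psi> (k - 1) (TI,V,j) \<phi> = dof p \<psi> k (TII,V,j) w"
    proof -
      have "card V \<noteq> Suc (k - 1)" using VD C(3) k1 by simp
      then have "dof p \<psi> (k - 1) (TI,V,j) \<phi> = l2 p V (Suc (k - 1)) (extd (k - 1) (\<psi> (k - 1) V j)) (extd (k - 1) \<phi>)"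
        by (simp add: dof_TI)
      also have "\<dots> = dof p \<psi> k (TII,V,j) w" using k1 by (simp add: dof_TII w_def)
      finally show ?thesis .
    qed
    ultimately show ?thesis using C(1) by simp
  qed
  have "dual_basis p X \<psi> N k (TII, S, n) = w"
    by (rule dual_basis_prop(2)[OF uk wX]) (use dofw in \<open>simp add: d_def\<close>)
  then show ?thesis by (simp add: w_def \<phi>_def)
qed

end
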